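(* Let $W^{(1)}$ be a pro-$p$ Coxeter group, $\mathcal O$ its set of orientations, and $\mathfrak A(W^{(1)})$ the group with generators $\{T_w\}_{w\in W^{(1)}}$ and relations $T_{ww'}=T_wT_{w'}$ whenever $\ell(ww')=\ell(w)+\ell(w')$ (notation as in the context). Then there exists a unique map \[ \theta:W^{(1)}\longrightarrow \mathrm{Hom}_{\mathrm{Set}}(\mathcal O,\mathfrak A(W^{(1)})),\qquad w\mapsto(\mathfrak o\mapsto\theta_{\mathfrak o}(w)) \] such that $\theta_{\mathfrak o}(ww')=\theta_{\mathfrak o}(w)\,\theta_{\mathfrak o\bullet w}(w')$ for all $w,w'\in W^{(1)}$ and $\mathfrak o\in\mathcal O$; $\theta_{\mathfrak o}(n_s)=T_{n_s^{\varepsilon}}^{\varepsilon}$ with $\varepsilon=\mathfrak o(1,s)\in\{\pm1\}$ for all $s\in S$ and $\mathfrak o\in\mathcal O$ (i.e. $\theta_{\mathfrak o}(n_s)=T_{n_s}$ if $\varepsilon=1$ and $=T_{n_s^{-1}}^{-1}$ if $\varepsilon=-1$); and $\theta_{\mathfrak o}(u)=T_u$ for all $u\in\Omega^{(1)}$ and $\mathfrak o\in\mathcal O$.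
   Context: Coxeter group $(W_{\mathrm{aff}},S)$ with length $\ell$ and $m(s,t)$ the order of $st$. Extended Coxeter group: $W=W_{\mathrm{aff}}\rtimes\Omega$ with $(W_{\mathrm{aff}},S)$ Coxeter and $\Omega$ preserving $S$ under conjugation; $\ell(wu)=\ell(w)$ for $w\in W_{\mathrm{aff}}$, $u\in\Omega$. Pro-$p$ Coxeter group: extension $1\to T\to W^{(1)}\xrightarrow{\pi}W\to1$, $T$ abelian, with lifts $n_s\in\pi^{-1}(s)$ satisfying the braid relations $n_sn_tn_s\cdots=n_tn_sn_t\cdots$ ($m(s,t)$ factors) when $m(s,t)<\infty$; $\ell$ on $W^{(1)}$ is $\ell\circ\pi$; $\Omega^{(1)}=\pi^{-1}(\Omega)$. Orientations: an orientation of $(W_{\mathrm{aff}},S)$ is a map $\mathfrak o:W_{\mathrm{aff}}\times S\to\{\pm1\}$ with (OR1) $\mathfrak o(ws,s)=-\mathfrak o(w,s)$ and (OR2) for $s,t\in S$ with $m=m(s,t)<\infty$ and $w\in W_{\mathrm{aff}}$, the sequences $(\mathfrak o(w,s),\mathfrak o(ws,t),\mathfrak o(wst,s),\dots)$ and $(\mathfrak o(w,t),\mathfrak o(wt,s),\dots)$ of length $m$ are, for some $0\le k\le m$, either ($k$ pluses then $m-k$ minuses) and ($m-k$ minuses then $k$ pluses), or ($k$ minuses then $m-k$ pluses) and ($m-k$ pluses then $k$ minuses). An orientation of $W$ is a map $W\times S\to\{\pm1\}$ of the form $(wu,s)\mapsto\mathfrak o(w,usu^{-1})$ ($w\in W_{\mathrm{aff}},u\in\Omega$)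 with $\mathfrak o$ an orientation of $W_{\mathrm{aff}}$; an orientation of $W^{(1)}$ is a map $(w,s)\mapsto\mathfrak o(\pi(w),s)$ with $\mathfrak o$ an orientation of $W$. $\mathcal O$ is the set of orientations of $W^{(1)}$, with right $W^{(1)}$-action $(\mathfrak o\bullet w)(w',s)=\mathfrak o(ww',s)$. *)

theory Defs
  imports "HOL-Algebra.Algebra"
begin

definition word_prod :: "('a, 'b) monoid_scheme \<Rightarrow> 'a list \<Rightarrow> 'a" where
  "word_prod G ws = foldr (\<lambda>x y. x \<otimes>\<^bsub>G\<^esub> y) ws \<one>\<^bsub>G\<^esub>"

fun alt_prod :: "('a, 'b) monoid_scheme \<Rightarrow> 'a \<Rightarrow> 'a \<Rightarrow> nat \<Rightarrow> 'a" where
  "alt_prod G a b 0 = \<one>\<^bsub>G\<^esub>"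
| "alt_prod G a b (Suc k) = a \<otimes>\<^bsub>G\<^esub> alt_prod G b a k"

text \<open>m(s,t): the order of st (0 encodes infinite order).\<close>
definition cox_m :: "('a, 'b) monoid_scheme \<Rightarrow> 'a \<Rightarrow> 'a \<Rightarrow> nat" where
  "cox_m W s t = group.ord W (s \<otimes>\<^bsub>W\<^esub> t)"

text \<open>The congruence on words in S generated by the Coxeter relators (st)^{m(s,t)}
  for m(s,t) finite (including s = t, giving s^2 = 1).\<close>
inductive cox_equiv :: "('a, 'b) monoid_scheme \<Rightarrow> 'a set \<Rightarrow> 'a list \<Rightarrow> 'a list \<Rightarrow> bool"
  for W S where
  cox_refl: "xs \<in> lists S \<Longrightarrow> cox_equiv W S xs xs"
| cox_sym: "cox_equiv W S xs ys \<Longrightarrow> cox_equiv W S ys xs"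
| cox_trans: "cox_equiv W S xs ys \<Longrightarrow> cox_equiv W S ys zs \<Longrightarrow> cox_equiv W S xs zs"
| cox_rel: "u \<in> lists S \<Longrightarrow> v \<in> lists S \<Longrightarrow> s \<in> S \<Longrightarrow> t \<in> S \<Longrightarrow> cox_m W s t \<noteq> 0 \<Longrightarrow>
     cox_equiv W S (u @ concat (replicate (cox_m W s t) [s, t]) @ v) (u @ v)"

text \<open>(Waff, S) is a Coxeter system inside the group W: S is a set of involutions
  generating the subgroup Waff, and Waff has the presentation
  < S | (st)^{m(s,t)} = 1 (m(s,t) < \<infinity>) >, i.e. two words in S have the same
  product iff they are equivalent under the Coxeter relations.\<close>
definition coxeter_system :: "('a, 'b) monoid_scheme \<Rightarrow> 'a set \<Rightarrow> 'a set \<Rightarrow> bool" where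
  "coxeter_system W Waff S \<longleftrightarrow>
     group W \<and> subgroup Waff W \<and> S \<subseteq> Waff \<and>
     (\<forall>s\<in>S. s \<noteq> \<one>\<^bsub>W\<^esub> \<and> s \<otimes>\<^bsub>W\<^esub> s = \<one>\<^bsub>W\<^esub>) \<and>
     Waff = word_prod W ` lists S \<and>
     (\<forall>u\<in>lists S. \<forall>v\<in>lists S. word_prod W u = word_prod W v \<longrightarrow> cox_equiv W S u v)"

definition ext_coxeter :: "('a, 'b) monoid_scheme \<Rightarrow> 'a set \<Rightarrow> 'a set \<Rightarrow> 'a set \<Rightarrow> bool" where
  "ext_coxeter W Waff S Omega \<longleftrightarrow>
     coxeter_system W Waff S \<and> Waff \<lhd> W \<and> subgroup Omega W \<and>
     Waff \<inter> Omega = {\<one>\<^bsub>W\<^esub>} \<and> Waff <#>\<^bsub>W\<^esub> Omega = carrier W \<and>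
     (\<forall>u\<in>Omega. \<forall>s\<in>S. u \<otimes>\<^bsub>W\<^esub> s \<otimes>\<^bsub>W\<^esub> inv\<^bsub>W\<^esub> u \<in> S)"

definition ext_length :: "('a, 'b) monoid_scheme \<Rightarrow> 'a set \<Rightarrow> 'a set \<Rightarrow> 'a \<Rightarrow> nat" where
  "ext_length W S Omega x =
     (LEAST n. \<exists>ws\<in>lists S. length ws = n \<and> (\<exists>u\<in>Omega. x = word_prod W ws \<otimes>\<^bsub>W\<^esub> u))"

definition pro_p_coxeter ::
  "('g, 'c) monoid_scheme \<Rightarrow> ('w, 'd) monoid_scheme \<Rightarrow> 'w set \<Rightarrow> 'w set \<Rightarrow> 'w set
     \<Rightarrow> ('g \<Rightarrow> 'w) \<Rightarrow> ('w \<Rightarrow> 'g) \<Rightarrow> bool" where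
  "pro_p_coxeter G W Waff S Omega prj n \<longleftrightarrow>
     group G \<and> ext_coxeter W Waff S Omega \<and>
     prj \<in> hom G W \<and> prj ` carrier G = carrier W \<and>
     (\<forall>a\<in>carrier G. \<forall>b\<in>carrier G. prj a = \<one>\<^bsub>W\<^esub> \<longrightarrow> prj b = \<one>\<^bsub>W\<^esub> \<longrightarrow>
        a \<otimes>\<^bsub>G\<^esub> b = b \<otimes>\<^bsub>G\<^esub> a) \<and>
     (\<forall>s\<in>S. n s \<in> carrier G \<and> prj (n s) = s) \<and>
     (\<forall>s\<in>S. \<forall>t\<in>S. cox_m W s t \<noteq> 0 \<longrightarrow>
        alt_prod G (n s) (n t) (cox_m W s t) = alt_prod G (n t) (n s) (cox_m W s t))"

definition pro_length ::
  "('w, 'd) monoid_scheme \<Rightarrow> 'w set \<Rightarrow> 'w set \<Rightarrow> ('g \<Rightarrow> 'w) \<Rightarrow> 'g \<Rightarrow> nat" where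
  "pro_length W S Omega prj g = ext_length W S Omega (prj g)"

definition sign :: "bool \<Rightarrow> int" where "sign b = (if b then 1 else -1)"

definition orientation_aff :: "('a, 'b) monoid_scheme \<Rightarrow> 'a set \<Rightarrow> 'a set \<Rightarrow> ('a \<Rightarrow> 'a \<Rightarrow> int) \<Rightarrow> bool" where
  "orientation_aff W Waff S ori \<longleftrightarrow>
     (\<forall>w\<in>Waff. \<forall>s\<in>S. ori w s \<in> {1, -1}) \<and>
     (\<forall>w\<in>Waff. \<forall>s\<in>S. ori (w \<otimes>\<^bsub>W\<^esub> s) s = - ori w s) \<and>
     (\<forall>w\<in>Waff. \<forall>s\<in>S. \<forall>t\<in>S. cox_m W s t \<noteq> 0 \<longrightarrow>
        (let m = cox_m W s t;
             seq1 = (\<lambda>i. ori (w \<otimes>\<^bsub>W\<^esub> alt_prod W s t i) (if even i then s else t));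
             seq2 = (\<lambda>i. ori (w \<otimes>\<^bsub>W\<^esub> alt_prod W t s i) (if even i then t else s))
         in \<exists>k\<le>m.
             ((\<forall>i<m. seq1 i = sign (i < k)) \<and> (\<forall>i<m. seq2 i = - sign (i < m - k))) \<or>
             ((\<forall>i<m. seq1 i = - sign (i < k)) \<and> (\<forall>i<m. seq2 i = sign (i < m - k)))))"

definition orientation_ext ::
  "('a, 'b) monoid_scheme \<Rightarrow> 'a set \<Rightarrow> 'a set \<Rightarrow> 'a set \<Rightarrow> ('a \<Rightarrow> 'a \<Rightarrow> int) \<Rightarrow> bool" where
  "orientation_ext W Waff S Omega Or \<longleftrightarrow>
     (\<exists>ori. orientation_aff W Waff S ori \<and>
        (\<forall>w\<in>Waff. \<forall>u\<in>Omega. \<forall>s\<in>S.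
           Or (w \<otimes>\<^bsub>W\<^esub> u) s = ori w (u \<otimes>\<^bsub>W\<^esub> s \<otimes>\<^bsub>W\<^esub> inv\<^bsub>W\<^esub> u)))"

text \<open>The set of orientations of W^(1), as maps on carrier G \<times> S
  (extensional: undefined outside carrier G \<times> S).\<close>
definition pro_orientations ::
  "('g, 'c) monoid_scheme \<Rightarrow> ('w, 'd) monoid_scheme \<Rightarrow> 'w set \<Rightarrow> 'w set \<Rightarrow> 'w set
     \<Rightarrow> ('g \<Rightarrow> 'w) \<Rightarrow> ('g \<Rightarrow> 'w \<Rightarrow> int) set" where
  "pro_orientations G W Waff S Omega prj =
     {(\<lambda>g s. if g \<in> carrier G \<and> s \<in> S then Or (prj g) s else undefined) | Or.
        orientation_ext W Waff S Omega Or}"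

definition orient_act :: "('g, 'c) monoid_scheme \<Rightarrow> 'w set \<Rightarrow> ('g \<Rightarrow> 'w \<Rightarrow> int) \<Rightarrow> 'g \<Rightarrow> ('g \<Rightarrow> 'w \<Rightarrow> int)" where
  "orient_act G S Or w = (\<lambda>w' s. if w' \<in> carrier G \<and> s \<in> S then Or (w \<otimes>\<^bsub>G\<^esub> w') s else undefined)"

text \<open>Words in the generators T_w^{\<plusminus>1}: (w, True) stands for T_w, (w, False) for T_w^{-1}.\<close>
inductive A_equiv :: "('g, 'c) monoid_scheme \<Rightarrow> ('g \<Rightarrow> nat) \<Rightarrow> ('g \<times> bool) list \<Rightarrow> ('g \<times> bool) list \<Rightarrow> bool"
  for G len where
  A_refl: "xs \<in> lists (carrier G \<times> UNIV) \<Longrightarrow> A_equiv G len xs xs"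
| A_sym: "A_equiv G len xs ys \<Longrightarrow> A_equiv G len ys xs"
| A_trans: "A_equiv G len xs ys \<Longrightarrow> A_equiv G len ys zs \<Longrightarrow> A_equiv G len xs zs"
| A_cancel: "u \<in> lists (carrier G \<times> UNIV) \<Longrightarrow> v \<in> lists (carrier G \<times> UNIV) \<Longrightarrow> x \<in> carrier G \<Longrightarrow>
     A_equiv G len (u @ [(x, b), (x, \<not> b)] @ v) (u @ v)"
| A_braid: "u \<in> lists (carrier G \<times> UNIV) \<Longrightarrow> v \<in> lists (carrier G \<times> UNIV) \<Longrightarrow>
     x \<in> carrier G \<Longrightarrow> y \<in> carrier G \<Longrightarrow> len (x \<otimes>\<^bsub>G\<^esub> y) = len x + len y \<Longrightarrow>
     A_equiv G len (u @ [(x \<otimes>\<^bsub>G\<^esub> y, True)] @ v) (u @ [(x, True), (y, True)] @ v)"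

definition A_rel :: "('g, 'c) monoid_scheme \<Rightarrow> ('g \<Rightarrow> nat) \<Rightarrow> (('g \<times> bool) list \<times> ('g \<times> bool) list) set" where
  "A_rel G len = {(xs, ys). A_equiv G len xs ys}"

definition A_mult :: "('g, 'c) monoid_scheme \<Rightarrow> ('g \<Rightarrow> nat) \<Rightarrow> ('g \<times> bool) list set \<Rightarrow> ('g \<times> bool) list set \<Rightarrow> ('g \<times> bool) list set" where
  "A_mult G len P Q = A_rel G len `` {zs. \<exists>xs\<in>P. \<exists>ys\<in>Q. zs = xs @ ys}"

definition A_group :: "('g, 'c) monoid_scheme \<Rightarrow> ('g \<Rightarrow> nat) \<Rightarrow> ('g \<times> bool) list set monoid" where
  "A_group G len =
     \<lparr> carrier = lists (carrier G \<times> UNIV) // A_rel G len,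
       monoid.mult = A_mult G len,
       one = A_rel G len `` {[]} \<rparr>"

definition A_gen :: "('g, 'c) monoid_scheme \<Rightarrow> ('g \<Rightarrow> nat) \<Rightarrow> 'g \<Rightarrow> ('g \<times> bool) list set" where
  "A_gen G len w = A_rel G len `` {[(w, True)]}"

end

theory Submission
  imports Defs
begin


lemma A_equiv_lists:
  assumes G: "group G" and "A_equiv G len xs ys"
  shows "xs \<in> lists (carrier G \<times> UNIV) \<and> ys \<in> lists (carrier G \<times> UNIV)"
  using assms(2) by induct (auto intro: monoid.m_closed[OF group.is_monoid[OF G]])

lemma A_equiv_app_left:
  assumes "A_equiv G len xs ys" "zs \<in> lists (carrier G \<times> UNIV)" "group G"
  shows "A_equiv G len (zs @ xs) (zs @ ys)"
  using assms
proof induct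
  case (A_refl xs) then show ?case by (intro A_equiv.A_refl) auto
next
  case (A_sym xs ys) then show ?case by (auto intro: A_equiv.A_sym)
next
  case (A_trans xs ys zs') then show ?case by (auto intro: A_equiv.A_trans)
next
  case (A_cancel u v x b)
  then show ?case using A_equiv.A_cancel[of "zs @ u" G v x len b] by simp
next
  case (A_braid u v x y)
  then show ?case using A_equiv.A_braid[of "zs @ u" G v x y len] by simp
qed

lemma A_equiv_app_right:
  assumes "A_equiv G len xs ys" "zs \<in> lists (carrier G \<times> UNIV)" "group G"
  shows "A_equiv G len (xs @ zs) (ys @ zs)"
  using assms
proof induct
  case (A_refl xs) then show ?case by (intro A_equiv.A_refl) auto
next
  case (A_sym xs ys) then show ?case by (auto intro: A_equiv.A_sym)
next
  case (A_trans xs ys zs') then show ?case by (auto intro: A_equiv.A_trans)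
next
  case (A_cancel u v x b)
  then show ?case using A_equiv.A_cancel[of u G "v @ zs" x len b] by simp
next
  case (A_braid u v x y)
  then show ?case using A_equiv.A_braid[of u G "v @ zs" x y len] by simp
qed

definition invw :: "('g \<times> bool) list \<Rightarrow> ('g \<times> bool) list" where
  "invw xs = rev (map (\<lambda>(x, b). (x, \<not> b)) xs)"

context group
begin

abbreviation "LL \<equiv> lists (carrier G \<times> (UNIV :: bool set))"

lemma A_equiv_app:
  assumes "A_equiv G len xs ys" "A_equiv G len xs' ys'"
  shows "A_equiv G len (xs @ xs') (ys @ ys')"
proof -
  have l: "xs \<in> LL" "ys \<in> LL" "xs' \<in> LL" "ys' \<in> LL"
    using A_equiv_lists[OF group_axioms] assms by blast+
  have "A_equiv G len (xs @ xs') (ys @ xs')"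
    using A_equiv_app_right[OF assms(1) l(3) group_axioms] .
  moreover have "A_equiv G len (ys @ xs') (ys @ ys')"
    using A_equiv_app_left[OF assms(2) l(2) group_axioms] .
  ultimately show ?thesis by (rule A_equiv.A_trans)
qed

lemma equiv_A_rel: "equiv LL (A_rel G len)"
proof -
  have "refl_on LL (A_rel G len)"
    unfolding refl_on_def A_rel_def
    using A_equiv_lists[OF group_axioms] by (auto simp del: in_lists_conv_set intro: A_equiv.intros)
  moreover have "sym (A_rel G len)" unfolding sym_def A_rel_def by (auto intro: A_equiv.intros)
  moreover have "trans (A_rel G len)" unfolding trans_def A_rel_def by (auto intro: A_equiv.intros)
  moreover have "A_rel G len \<subseteq> LL \<times> LL"
    using A_equiv_lists[OF group_axioms] unfolding A_rel_def by blast
  ultimately show ?thesis by (simp add: equiv_def)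
qed

lemma A_rel_iff: "(xs, ys) \<in> A_rel G len \<longleftrightarrow> A_equiv G len xs ys"
  by (simp add: A_rel_def)

lemma A_mult_class:
  assumes "xs \<in> LL" "ys \<in> LL"
  shows "A_mult G len (A_rel G len `` {xs}) (A_rel G len `` {ys}) = A_rel G len `` {xs @ ys}"
proof -
  let ?R = "A_rel G len"
  let ?S = "{zs. \<exists>xs'\<in>?R `` {xs}. \<exists>ys'\<in>?R `` {ys}. zs = xs' @ ys'}"
  have 1: "xs @ ys \<in> ?S"
    using assms by (intro CollectI bexI[of _ xs] bexI[of _ ys]) (auto simp: A_rel_iff simp del: in_lists_conv_set intro!: A_equiv.A_refl)
  have 2: "?R `` ?S \<subseteq> ?R `` {xs @ ys}"
  proof
    fix z assume "z \<in> ?R `` ?S"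
    then obtain xs' ys' where "(xs, xs') \<in> ?R" "(ys, ys') \<in> ?R" "(xs' @ ys', z) \<in> ?R"
      by auto
    then have "A_equiv G len (xs @ ys) z"
      by (auto simp: A_rel_iff intro: A_equiv.A_trans A_equiv_app)
    then show "z \<in> ?R `` {xs @ ys}" by (simp add: A_rel_iff)
  qed
  have 3: "?R `` {xs @ ys} \<subseteq> ?R `` ?S" using 1 by auto
  show ?thesis unfolding A_mult_def using 2 3 by blast
qed

lemmas A_mult_class' = A_mult_class[unfolded in_lists_conv_set]

lemma A_class_eq:
  "A_equiv G len xs ys \<Longrightarrow> A_rel G len `` {xs} = A_rel G len `` {ys}"
  by (rule equiv_class_eq[OF equiv_A_rel]) (simp add: A_rel_iff)

lemma invw_lists: "xs \<in> LL \<Longrightarrow> invw xs \<in> LL"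
  by (auto simp: invw_def)

lemma invw_cancel: "xs \<in> LL \<Longrightarrow> A_equiv G len (invw xs @ xs) []"
proof (induct xs)
  case Nil then show ?case by (simp add: invw_def A_equiv.A_refl)
next
  case (Cons a xs)
  obtain x b where a: "a = (x, b)" by force
  have x: "x \<in> carrier G" and xs: "xs \<in> LL" using Cons a by auto
  have "invw (a # xs) @ a # xs = invw xs @ [(x, \<not> b), (x, \<not>\<not> b)] @ xs"
    by (simp add: invw_def a)
  moreover have "A_equiv G len (invw xs @ [(x, \<not> b), (x, \<not>\<not> b)] @ xs) (invw xs @ xs)"
    by (rule A_equiv.A_cancel) (use x xs invw_lists in auto)
  ultimately show ?case using Cons xs by (metis A_equiv.A_trans)
qed

lemma group_A: "group (A_group G len)"
proof (rule groupI)
  let ?A = "A_group G len"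
  let ?R = "A_rel G len"
  have carr: "carrier ?A = LL // ?R" by (simp add: A_group_def)
  have mul: "\<And>P Q. P \<otimes>\<^bsub>?A\<^esub> Q = A_mult G len P Q" by (simp add: A_group_def)
  have one: "\<one>\<^bsub>?A\<^esub> = ?R `` {[]}" by (simp add: A_group_def)
  show "\<And>x y. x \<in> carrier ?A \<Longrightarrow> y \<in> carrier ?A \<Longrightarrow> x \<otimes>\<^bsub>?A\<^esub> y \<in> carrier ?A"
    unfolding carr mul
  proof -
    fix x y assume "x \<in> LL // ?R" "y \<in> LL // ?R"
    then obtain xs ys where "xs \<in> LL" "ys \<in> LL" "x = ?R `` {xs}" "y = ?R `` {ys}"
      by (auto elim!: quotientE simp del: in_lists_conv_set)
    then show "A_mult G len x y \<in> LL // ?R"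
      by (simp only: A_mult_class) (rule quotientI, simp)
  qed
  show "\<one>\<^bsub>?A\<^esub> \<in> carrier ?A" unfolding carr one by (auto intro!: quotientI)
  show "\<And>x y z. x \<in> carrier ?A \<Longrightarrow> y \<in> carrier ?A \<Longrightarrow> z \<in> carrier ?A \<Longrightarrow>
      x \<otimes>\<^bsub>?A\<^esub> y \<otimes>\<^bsub>?A\<^esub> z = x \<otimes>\<^bsub>?A\<^esub> (y \<otimes>\<^bsub>?A\<^esub> z)"
    unfolding carr mul
  proof -
    fix x y z assume "x \<in> LL // ?R" "y \<in> LL // ?R" "z \<in> LL // ?R"
    then obtain xs ys zs where "xs \<in> LL" "ys \<in> LL" "zs \<in> LL" "x = ?R `` {xs}" "y = ?R `` {ys}" "z = ?R `` {zs}"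
      by (auto elim!: quotientE simp del: in_lists_conv_set)
    then show "A_mult G len (A_mult G len x y) z = A_mult G len x (A_mult G len y z)"
      by (simp only: A_mult_class append_in_lists_conv append_assoc simp_thms)
  qed
  show "\<And>x. x \<in> carrier ?A \<Longrightarrow> \<one>\<^bsub>?A\<^esub> \<otimes>\<^bsub>?A\<^esub> x = x"
    unfolding carr mul one by (auto elim!: quotientE simp: A_mult_class')
  show "\<And>x. x \<in> carrier ?A \<Longrightarrow> \<exists>y\<in>carrier ?A. y \<otimes>\<^bsub>?A\<^esub> x = \<one>\<^bsub>?A\<^esub>"
  proof -
    fix x assume "x \<in> carrier ?A"
    then obtain xs where xs: "xs \<in> LL" "x = ?R `` {xs}" unfolding carr by (auto elim!: quotientE)
    show "\<exists>y\<in>carrier ?A. y \<otimes>\<^bsub>?A\<^esub> x = \<one>\<^bsub>?A\<^esub>"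
    proof (intro bexI)
      show "?R `` {invw xs} \<otimes>\<^bsub>?A\<^esub> x = \<one>\<^bsub>?A\<^esub>"
        unfolding mul one xs(2) using xs(1) invw_lists invw_cancel A_class_eq
        by (simp add: A_mult_class)
      show "?R `` {invw xs} \<in> carrier ?A"
        unfolding carr using xs(1) invw_lists by (auto intro!: quotientI)
    qed
  qed
qed

lemma A_gen_carrier: "x \<in> carrier G \<Longrightarrow> A_gen G len x \<in> carrier (A_group G len)"
  by (auto simp: A_gen_def A_group_def intro!: quotientI)

lemma A_gen_mult:
  assumes "x \<in> carrier G" "y \<in> carrier G" "len (x \<otimes> y) = len x + len y"
  shows "A_gen G len x \<otimes>\<^bsub>A_group G len\<^esub> A_gen G len y = A_gen G len (x \<otimes> y)"
proof -
  have "A_gen G len x \<otimes>\<^bsub>A_group G len\<^esub> A_gen G len y = A_rel G len `` {[(x, True), (y, True)]}"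
    using assms by (simp add: A_gen_def A_group_def A_mult_class)
  also have "\<dots> = A_gen G len (x \<otimes> y)"
    unfolding A_gen_def
    by (rule A_class_eq, rule A_equiv.A_sym) (use A_equiv.A_braid[of "[]" G "[]" x y len] assms in simp)
  finally show ?thesis .
qed

end


fun altl :: "'a \<Rightarrow> 'a \<Rightarrow> nat \<Rightarrow> 'a list" where
  "altl x y 0 = []"
| "altl x y (Suc k) = x # altl y x k"

lemma altl_length[simp]: "length (altl x y k) = k"
  by (induct k arbitrary: x y) auto

lemma altl_set: "set (altl x y k) \<subseteq> {x, y}"
  by (induct k arbitrary: x y) auto

lemma altl_lists: "x \<in> A \<Longrightarrow> y \<in> A \<Longrightarrow> altl x y k \<in> lists A"
  using altl_set[of x y k] by auto

lemma altl_relator: "concat (replicate m [s, t]) = altl s t (2 * m)"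
  by (induct m) auto

lemma altl_nth: "i < k \<Longrightarrow> altl x y k ! i = (if even i then x else y)"
  by (induct k arbitrary: x y i) (auto simp: nth_Cons split: nat.split)

fun refl_list :: "('a, 'b) monoid_scheme \<Rightarrow> 'a list \<Rightarrow> 'a list" where
  "refl_list W [] = []"
| "refl_list W (c # ws) = c # map (\<lambda>x. c \<otimes>\<^bsub>W\<^esub> x \<otimes>\<^bsub>W\<^esub> inv\<^bsub>W\<^esub> c) (refl_list W ws)"

context group
begin

lemma word_prod_closed: "ws \<in> lists (carrier G) \<Longrightarrow> word_prod G ws \<in> carrier G"
  by (induct ws) (auto simp: word_prod_def)

lemma word_prod_Nil[simp]: "word_prod G [] = \<one>"
  by (simp add: word_prod_def)

lemma word_prod_Cons: "word_prod G (x # ws) = x \<otimes> word_prod G ws"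
  by (simp add: word_prod_def)

lemma word_prod_append:
  "ws \<in> lists (carrier G) \<Longrightarrow> vs \<in> lists (carrier G) \<Longrightarrow>
   word_prod G (ws @ vs) = word_prod G ws \<otimes> word_prod G vs"
  by (induct ws) (auto simp: word_prod_Cons word_prod_closed m_assoc)

lemma alt_closed: "x \<in> carrier G \<Longrightarrow> y \<in> carrier G \<Longrightarrow> alt_prod G x y k \<in> carrier G"
  by (induct k arbitrary: x y) auto

lemma word_prod_altl: "word_prod G (altl x y k) = alt_prod G x y k"
  by (induct k arbitrary: x y) (auto simp: word_prod_Cons)

lemma alt_Suc_right:
  "x \<in> carrier G \<Longrightarrow> y \<in> carrier G \<Longrightarrow>
   alt_prod G x y (Suc k) = alt_prod G x y k \<otimes> (if even k then x else y)"
proof (induct k arbitrary: x y)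
  case 0 then show ?case by simp
next
  case (Suc k)
  have "alt_prod G x y (Suc (Suc k)) = x \<otimes> alt_prod G y x (Suc k)" by simp
  also have "\<dots> = x \<otimes> (alt_prod G y x k \<otimes> (if even k then y else x))"
    using Suc.hyps[of y x] Suc.prems by simp
  also have "\<dots> = alt_prod G x y (Suc k) \<otimes> (if even (Suc k) then x else y)"
    using Suc.prems by (simp add: m_assoc alt_closed)
  finally show ?case .
qed

lemma map_conj_one: "xs \<in> lists (carrier G) \<Longrightarrow> map (\<lambda>x. \<one> \<otimes> x \<otimes> inv \<one>) xs = xs"
  by (induct xs) auto

lemma alt_add_even:
  assumes "x \<in> carrier G" "y \<in> carrier G"
  shows "alt_prod G x y (2 * d + r) = (x \<otimes> y) [^] d \<otimes> alt_prod G x y r"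
  using assms
proof (induct d)
  case 0 then show ?case by (simp add: alt_closed)
next
  case (Suc d)
  have "alt_prod G x y (2 * Suc d + r) = x \<otimes> (y \<otimes> alt_prod G x y (2 * d + r))"
    by (simp add: numeral_2_eq_2)
  also have "\<dots> = (x \<otimes> y) \<otimes> ((x \<otimes> y) [^] d \<otimes> alt_prod G x y r)"
    using Suc by (simp add: m_assoc alt_closed)
  also have "\<dots> = (x \<otimes> y) [^] Suc d \<otimes> alt_prod G x y r"
  proof -
    have c: "(x \<otimes> y) \<otimes> (x \<otimes> y) [^] d = (x \<otimes> y) [^] d \<otimes> (x \<otimes> y)"
      using nat_pow_Suc2[of "x \<otimes> y" d] Suc.prems by simp
    show ?thesis using Suc.prems by (simp add: m_assoc[symmetric] c alt_closed)
  qed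
  finally show ?case .
qed

lemma lists_conj_closed:
  "c \<in> carrier G \<Longrightarrow> xs \<in> lists (carrier G) \<Longrightarrow> map (\<lambda>x. c \<otimes> x \<otimes> inv c) xs \<in> lists (carrier G)"
  by auto

lemma refl_list_closed: "ws \<in> lists (carrier G) \<Longrightarrow> refl_list G ws \<in> lists (carrier G)"
  by (induct ws) auto


lemma refl_list_append:
  assumes "u \<in> lists (carrier G)" "v \<in> lists (carrier G)"
  shows "refl_list G (u @ v) = refl_list G u @ map (\<lambda>x. word_prod G u \<otimes> x \<otimes> inv (word_prod G u)) (refl_list G v)"
  using assms(1)
proof (induct u)
  case Nil
  have "map (\<lambda>x. \<one> \<otimes> x \<otimes> inv \<one>) (refl_list G v) = refl_list G v"
    using refl_list_closed[OF assms(2)] by (rule map_conj_one)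
  then show ?case by simp
next
  case (Cons c u)
  have c: "c \<in> carrier G" and u: "u \<in> lists (carrier G)" using Cons by auto
  have p: "word_prod G u \<in> carrier G" using word_prod_closed[OF u] .
  have "map (\<lambda>x. c \<otimes> x \<otimes> inv c) (map (\<lambda>x. word_prod G u \<otimes> x \<otimes> inv (word_prod G u)) (refl_list G v))
      = map (\<lambda>x. word_prod G (c # u) \<otimes> x \<otimes> inv (word_prod G (c # u))) (refl_list G v)"
    using refl_list_closed[OF assms(2)] c p
    by (auto simp: word_prod_Cons m_assoc inv_mult_group)
  then show ?case using Cons.hyps(3) c u by simp
qed

lemma refl_list_altl:
  assumes "x \<in> carrier G" "y \<in> carrier G" "x \<otimes> x = \<one>" "y \<otimes> y = \<one>"
  shows "refl_list G (altl x y k) = map (\<lambda>j. alt_prod G x y (Suc (2 * j))) [0..<k]"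
  using assms
proof (induct k arbitrary: x y)
  case 0 then show ?case by simp
next
  case (Suc k)
  have ix: "inv x = x" using Suc by (simp add: inv_equality)
  have IH: "refl_list G (altl y x k) = map (\<lambda>j. alt_prod G y x (Suc (2 * j))) [0..<k]"
    using Suc by blast
  have e: "x \<otimes> alt_prod G y x (Suc (2 * j)) \<otimes> inv x = alt_prod G x y (Suc (2 * Suc j))" for j
  proof -
    have a: "x \<otimes> alt_prod G y x (2*j) = alt_prod G x y (2*j) \<otimes> x"
      using alt_Suc_right[of x y "2*j"] Suc.prems by simp
    show ?thesis using Suc.prems ix by (simp add: m_assoc alt_closed a[symmetric])
  qed
  have "refl_list G (altl x y (Suc k)) = x # map (\<lambda>j. alt_prod G x y (Suc (2 * Suc j))) [0..<k]"
    using IH e by simp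
  also have "\<dots> = map (\<lambda>j. alt_prod G x y (Suc (2 * j))) [0..<Suc k]"
    using Suc.prems by (simp add: map_upt_Suc del: upt_Suc)
  finally show ?case .
qed

lemma count_list_distinct: "distinct xs \<Longrightarrow> x \<in> set xs \<Longrightarrow> count_list xs x = 1"
  by (induct xs) auto

end

lemma refl_list_length[simp]: "length (refl_list G ws) = length ws"
  by (induct ws) auto

definition Nset :: "('a, 'b) monoid_scheme \<Rightarrow> 'a list \<Rightarrow> 'a set" where
  "Nset W ws = {x. odd (count_list (refl_list W ws) x)}"

lemma Nset_card: "card (Nset W ws) \<le> length ws"
proof -
  have "Nset W ws \<subseteq> set (refl_list W ws)"
    unfolding Nset_def using count_notin by fastforce
  then have "card (Nset W ws) \<le> card (set (refl_list W ws))" by (simp add: card_mono)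
  also have "\<dots> \<le> length ws" using card_length[of "refl_list W ws"] by simp
  finally show ?thesis .
qed

locale coxsys = group W for W (structure) +
  fixes Waff S
  assumes cs: "coxeter_system W Waff S"
begin

lemma S_carr: "S \<subseteq> carrier W"
  using cs unfolding coxeter_system_def by (meson subgroup.subset subset_trans)

lemma S_inv: "s \<in> S \<Longrightarrow> s \<otimes> s = \<one>"
  using cs unfolding coxeter_system_def by blast

lemma S_ne1: "s \<in> S \<Longrightarrow> s \<noteq> \<one>"
  using cs unfolding coxeter_system_def by blast

lemma S_invS: "s \<in> S \<Longrightarrow> inv s = s"
  using S_inv S_carr by (simp add: inv_equality subset_iff)

lemma Waff_eq: "Waff = word_prod W ` lists S"
  using cs unfolding coxeter_system_def by blast

lemma Waff_sub: "subgroup Waff W"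
  using cs unfolding coxeter_system_def by blast

lemma pres: "u \<in> lists S \<Longrightarrow> v \<in> lists S \<Longrightarrow> word_prod W u = word_prod W v \<Longrightarrow> cox_equiv W S u v"
  using cs unfolding coxeter_system_def by blast

lemma listsS: "ws \<in> lists S \<Longrightarrow> ws \<in> lists (carrier W)"
  using S_carr by auto

lemma cox_m_sym: "s \<in> S \<Longrightarrow> t \<in> S \<Longrightarrow> cox_m W t s = cox_m W s t"
proof -
  assume s: "s \<in> S" and t: "t \<in> S"
  have sc: "s \<in> carrier W" and tc: "t \<in> carrier W" using s t S_carr by auto
  have "inv (s \<otimes> t) = t \<otimes> s" using s t sc tc by (simp add: inv_mult_group S_invS)
  then show ?thesis unfolding cox_m_def using ord_inv[of "s \<otimes> t"] sc tc by simp
qed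

lemma relator_refl:
  assumes s: "s \<in> S" and t: "t \<in> S" and m: "cox_m W s t \<noteq> 0"
  defines "m \<equiv> cox_m W s t"
  shows "\<exists>L. refl_list W (concat (replicate m [s, t])) = L @ L"
proof -
  have sc: "s \<in> carrier W" and tc: "t \<in> carrier W" using s t S_carr by auto
  let ?f = "\<lambda>j. alt_prod W s t (Suc (2 * j))"
  have pm: "(s \<otimes> t) [^] m = \<one>" unfolding m_def cox_m_def using sc tc by simp
  have per: "?f (j + m) = ?f j" for j
  proof -
    have "Suc (2 * (j + m)) = 2 * m + Suc (2 * j)" by simp
    then have "?f (j + m) = alt_prod W s t (2 * m + Suc (2 * j))" by (simp only:)
    also have "\<dots> = (s \<otimes> t) [^] m \<otimes> ?f j" by (rule alt_add_even[OF sc tc])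
    also have "\<dots> = ?f j" using pm sc tc by (simp only: l_one alt_closed)
    finally show ?thesis .
  qed
  have "refl_list W (concat (replicate m [s, t])) = map ?f [0..<2 * m]"
    unfolding altl_relator by (rule refl_list_altl[OF sc tc S_inv[OF s] S_inv[OF t]])
  also have "[0..<2 * m] = [0..<m] @ map (\<lambda>j. j + m) [0..<m]"
  proof -
    have "[0..<m + m] = [0..<m] @ [m..<m + m]" by (rule upt_add_eq_append) simp
    moreover have "map (\<lambda>j. j + m) [0..<m] = [m..<m + m]" by (rule map_add_upt)
    ultimately show ?thesis by (simp add: mult_2)
  qed
  also have "map ?f ([0..<m] @ map (\<lambda>j. j + m) [0..<m]) = map ?f [0..<m] @ map ?f [0..<m]"
    using per by (simp only: map_append map_map comp_def)
  finally show ?thesis by blast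
qed

lemma Nset_cox_equiv: "cox_equiv W S u v \<Longrightarrow> Nset W u = Nset W v"
proof (induct rule: cox_equiv.induct)
  case (cox_refl xs) then show ?case by simp
next
  case (cox_sym xs ys) then show ?case by simp
next
  case (cox_trans xs ys zs) then show ?case by simp
next
  case (cox_rel u v s t)
  have uc: "u \<in> lists (carrier W)" and vc: "v \<in> lists (carrier W)" using cox_rel listsS by auto
  let ?r = "concat (replicate (cox_m W s t) [s, t])"
  have sc: "s \<in> carrier W" and tc: "t \<in> carrier W" using cox_rel S_carr by auto
  have rc: "?r \<in> lists (carrier W)" using sc tc by (simp add: altl_relator altl_lists)
  have pm: "(s \<otimes> t) [^] cox_m W s t = \<one>" unfolding cox_m_def using sc tc by simp
  have "word_prod W ?r = alt_prod W s t (2 * cox_m W s t + 0)"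
    by (simp only: altl_relator word_prod_altl add_0_right)
  also have "\<dots> = (s \<otimes> t) [^] cox_m W s t \<otimes> alt_prod W s t 0" by (rule alt_add_even[OF sc tc])
  also have "\<dots> = \<one>" using pm by simp
  finally have pr: "word_prod W ?r = \<one>" .
  obtain L where L: "refl_list W ?r = L @ L" using relator_refl cox_rel by blast
  let ?c = "\<lambda>x. word_prod W u \<otimes> x \<otimes> inv (word_prod W u)"
  have id1: "map (\<lambda>x. word_prod W ?r \<otimes> x \<otimes> inv (word_prod W ?r)) (refl_list W v) = refl_list W v"
    unfolding pr by (rule map_conj_one[OF refl_list_closed[OF vc]])
  have e1: "refl_list W (u @ ?r @ v) = refl_list W u @ map ?c (L @ L) @ map ?c (refl_list W v)"
  proof -
    have "refl_list W (?r @ v) = L @ L @ refl_list W v"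
      using refl_list_append[OF rc vc] id1 L by simp
    then show ?thesis using refl_list_append[OF uc, of "?r @ v"] rc vc by simp
  qed
  have e2: "refl_list W (u @ v) = refl_list W u @ map ?c (refl_list W v)"
    using refl_list_append[OF uc vc] .
  have "count_list (refl_list W (u @ ?r @ v)) x = count_list (refl_list W (u @ v)) x + 2 * count_list (map ?c L) x" for x
    unfolding e1 e2 by simp
  then show ?case unfolding Nset_def by simp
qed

lemma altl_length_bound:
  assumes s: "s \<in> S" and t: "t \<in> S" and m: "cox_m W s t \<noteq> 0" and k: "k \<le> cox_m W s t"
    and ws: "ws \<in> lists S" and eq: "word_prod W ws = alt_prod W s t k"
  shows "k \<le> length ws"
proof -
  have sc: "s \<in> carrier W" and tc: "t \<in> carrier W" using s t S_carr by auto
  let ?f = "\<lambda>j. alt_prod W s t (Suc (2 * j))"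
  have R: "refl_list W (altl s t k) = map ?f [0..<k]"
    using refl_list_altl[OF sc tc S_inv[OF s] S_inv[OF t]] .
  have inj: "inj_on ?f {0..<k}"
  proof (rule inj_onI)
    fix i j assume i: "i \<in> {0..<k}" and j: "j \<in> {0..<k}" and e: "?f i = ?f j"
    show "i = j"
    proof (rule ccontr)
      assume "i \<noteq> j"
      then obtain a b where ab: "a < b" "b < k" "?f a = ?f b"
      proof (cases "i < j")
        case True then show ?thesis using that[of i j] i j e by auto
      next
        case False then show ?thesis using that[of j i] i j e \<open>i \<noteq> j\<close> by auto
      qed
      define d where "d = b - a"
      have d: "0 < d" "d < cox_m W s t" using ab k unfolding d_def by auto
      have "Suc (2 * b) = 2 * d + Suc (2 * a)" using ab unfolding d_def by simp
      then have "?f b = (s \<otimes> t) [^] d \<otimes> ?f a" using alt_add_even[OF sc tc, of d "Suc (2 * a)"] by (simp only:)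
      then have "(s \<otimes> t) [^] d = \<one>" using ab(3) sc tc alt_closed
        by (simp add: r_cancel_one)
      then have "cox_m W s t dvd d" unfolding cox_m_def using pow_eq_id sc tc by simp
      then show False using d by (simp add: nat_dvd_not_less)
    qed
  qed
  have dist: "distinct (refl_list W (altl s t k))" by (simp only: R distinct_map set_upt distinct_upt inj simp_thms)
  have "Nset W (altl s t k) = set (refl_list W (altl s t k))"
    unfolding Nset_def using count_list_distinct[OF dist] count_notin by fastforce
  then have c: "card (Nset W (altl s t k)) = k" using distinct_card[OF dist] by simp
  have "cox_equiv W S ws (altl s t k)"
    using pres[OF ws altl_lists[OF s t]] eq word_prod_altl by simp
  then have "Nset W ws = Nset W (altl s t k)" by (rule Nset_cox_equiv)
  then show ?thesis using Nset_card[of W ws] c by simp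
qed

end

locale extcox = coxsys W Waff S for W (structure) and Waff S +
  fixes Omega
  assumes ec: "ext_coxeter W Waff S Omega"
begin

lemma Om_sub: "subgroup Omega W" using ec unfolding ext_coxeter_def by (elim conjE)
lemma Om_int: "Waff \<inter> Omega = {\<one>}" using ec unfolding ext_coxeter_def by (elim conjE)
lemma Om_prod: "Waff <#> Omega = carrier W" using ec unfolding ext_coxeter_def by (elim conjE)
lemma Om_conj_all: "\<forall>u\<in>Omega. \<forall>s\<in>S. u \<otimes> s \<otimes> inv u \<in> S"
  using ec unfolding ext_coxeter_def by (elim conjE)
lemma Om_conj: "u \<in> Omega \<Longrightarrow> s \<in> S \<Longrightarrow> u \<otimes> s \<otimes> inv u \<in> S"
  using Om_conj_all by blast

lemma Om_carr: "u \<in> Omega \<Longrightarrow> u \<in> carrier W"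
  by (rule subgroup.mem_carrier[OF Om_sub])

lemma Waff_carr: "w \<in> Waff \<Longrightarrow> w \<in> carrier W"
  by (rule subgroup.mem_carrier[OF Waff_sub])

lemma wp_Waff: "ws \<in> lists S \<Longrightarrow> word_prod W ws \<in> Waff"
  unfolding Waff_eq by (rule imageI)

lemma decomp_unique:
  assumes "w \<in> Waff" "w' \<in> Waff" "u \<in> Omega" "u' \<in> Omega" "w \<otimes> u = w' \<otimes> u'"
  shows "w = w' \<and> u = u'"
proof -
  have c: "w \<in> carrier W" "w' \<in> carrier W" "u \<in> carrier W" "u' \<in> carrier W"
    using assms Om_carr Waff_carr by auto
  have 1: "inv w' \<otimes> (w \<otimes> u) = u'"
    by (rule inv_solve_left'[THEN iffD2]) (use c assms(5) in auto)
  have "inv w' \<otimes> w = u' \<otimes> inv u"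
    by (rule inv_solve_right[THEN iffD2]) (use c 1 in \<open>auto simp: m_assoc\<close>)
  moreover have "inv w' \<otimes> w \<in> Waff" using assms Waff_sub by (simp add: subgroup.m_closed subgroup.m_inv_closed)
  moreover have "u' \<otimes> inv u \<in> Omega" using assms Om_sub by (simp add: subgroup.m_closed subgroup.m_inv_closed)
  ultimately have "inv w' \<otimes> w = \<one>" "u' \<otimes> inv u = \<one>" using Om_int by auto
  moreover have "inv w' \<otimes> w = \<one> \<Longrightarrow> w = w'"
    using inv_solve_left'[of "\<one>" w' w] c by simp
  moreover have "u' \<otimes> inv u = \<one> \<Longrightarrow> u' = u"
    using inv_solve_right'[of "\<one>" u' u] c by simp
  ultimately show ?thesis by simp
qed

lemma ext_length_mult_Om:
  assumes y: "y \<in> carrier W" and u: "u \<in> Omega"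
  shows "ext_length W S Omega (y \<otimes> u) = ext_length W S Omega y"
proof -
  have uc: "u \<in> carrier W" using Om_carr u by blast
  have "(\<exists>u'\<in>Omega. y \<otimes> u = word_prod W ws \<otimes> u') \<longleftrightarrow> (\<exists>u'\<in>Omega. y = word_prod W ws \<otimes> u')"
    if ws: "ws \<in> lists S" for ws
  proof
    assume "\<exists>u'\<in>Omega. y \<otimes> u = word_prod W ws \<otimes> u'"
    then obtain u' where u': "u' \<in> Omega" "y \<otimes> u = word_prod W ws \<otimes> u'" by blast
    have om: "u' \<otimes> inv u \<in> Omega" using u u' Om_sub by (simp add: subgroup.m_closed subgroup.m_inv_closed)
    have pc: "word_prod W ws \<in> carrier W" using word_prod_closed[OF listsS[OF ws]] .
    have "y = (word_prod W ws \<otimes> u') \<otimes> inv u"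
      by (rule inv_solve_right[THEN iffD2]) (use u'(2) y uc Om_carr[OF u'(1)] pc in auto)
    moreover have "(word_prod W ws \<otimes> u') \<otimes> inv u = word_prod W ws \<otimes> (u' \<otimes> inv u)"
      using uc Om_carr[OF u'(1)] pc by (simp add: m_assoc)
    ultimately have "y = word_prod W ws \<otimes> (u' \<otimes> inv u)" by simp
    with om show "\<exists>u'\<in>Omega. y = word_prod W ws \<otimes> u'" by blast
  next
    assume "\<exists>u'\<in>Omega. y = word_prod W ws \<otimes> u'"
    then obtain u' where u': "u' \<in> Omega" "y = word_prod W ws \<otimes> u'" by blast
    have "u' \<otimes> u \<in> Omega" using u u' Om_sub by (simp add: subgroup.m_closed)
    moreover have "y \<otimes> u = word_prod W ws \<otimes> (u' \<otimes> u)"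
      using u'(2) uc Om_carr[OF u'(1)] word_prod_closed[OF listsS[OF ws]] by (simp add: m_assoc)
    ultimately show "\<exists>u'\<in>Omega. y \<otimes> u = word_prod W ws \<otimes> u'" by blast
  qed
  note key = this
  have "(\<exists>ws\<in>lists S. length ws = n \<and> (\<exists>u'\<in>Omega. y \<otimes> u = word_prod W ws \<otimes> u'))
     = (\<exists>ws\<in>lists S. length ws = n \<and> (\<exists>u'\<in>Omega. y = word_prod W ws \<otimes> u'))" for n
  proof
    assume "\<exists>ws\<in>lists S. length ws = n \<and> (\<exists>u'\<in>Omega. y \<otimes> u = word_prod W ws \<otimes> u')"
    then obtain ws where "ws \<in> lists S" "length ws = n" "\<exists>u'\<in>Omega. y \<otimes> u = word_prod W ws \<otimes> u'"
      by blast
    then show "\<exists>ws\<in>lists S. length ws = n \<and> (\<exists>u'\<in>Omega. y = word_prod W ws \<otimes> u')"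
      using key[of ws] by blast
  next
    assume "\<exists>ws\<in>lists S. length ws = n \<and> (\<exists>u'\<in>Omega. y = word_prod W ws \<otimes> u')"
    then obtain ws where "ws \<in> lists S" "length ws = n" "\<exists>u'\<in>Omega. y = word_prod W ws \<otimes> u'"
      by blast
    then show "\<exists>ws\<in>lists S. length ws = n \<and> (\<exists>u'\<in>Omega. y \<otimes> u = word_prod W ws \<otimes> u')"
      using key[of ws] by blast
  qed
  then show ?thesis unfolding ext_length_def by (simp only:)
qed

lemma ext_length_Om:
  assumes u: "u \<in> Omega" shows "ext_length W S Omega u = 0"
  unfolding ext_length_def
proof (rule Least_equality)
  have "u = word_prod W [] \<otimes> u" using Om_carr[OF u] by simp
  then show "\<exists>ws\<in>lists S. length ws = 0 \<and> (\<exists>u'\<in>Omega. u = word_prod W ws \<otimes> u')"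
    using u by (intro bexI[of _ "[]"]) auto
qed simp

lemma ext_length_alt:
  assumes s: "s \<in> S" and t: "t \<in> S" and m: "cox_m W s t \<noteq> 0" and k: "k \<le> cox_m W s t"
  shows "ext_length W S Omega (alt_prod W s t k) = k"
  unfolding ext_length_def
proof (rule Least_equality)
  have "altl s t k \<in> lists S" by (rule altl_lists[OF s t])
  moreover have "alt_prod W s t k = word_prod W (altl s t k) \<otimes> \<one>"
    using s t S_carr by (auto simp: word_prod_altl intro!: r_one[symmetric] alt_closed)
  moreover have "\<one> \<in> Omega" by (rule subgroup.one_closed[OF Om_sub])
  ultimately show "\<exists>ws\<in>lists S. length ws = k \<and> (\<exists>u\<in>Omega. alt_prod W s t k = word_prod W ws \<otimes> u)"
    by (intro bexI[of _ "altl s t k"]) auto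
next
  fix y assume "\<exists>ws\<in>lists S. length ws = y \<and> (\<exists>u\<in>Omega. alt_prod W s t k = word_prod W ws \<otimes> u)"
  then obtain ws u where ws: "ws \<in> lists S" "length ws = y" and u: "u \<in> Omega"
    and e: "alt_prod W s t k = word_prod W ws \<otimes> u" by blast
  have "alt_prod W s t k = word_prod W (altl s t k) \<otimes> \<one>"
    using s t S_carr by (auto simp: word_prod_altl intro!: r_one[symmetric] alt_closed)
  then have "word_prod W (altl s t k) = word_prod W ws"
    using decomp_unique[OF wp_Waff[OF altl_lists[OF s t]] wp_Waff[OF ws(1)] subgroup.one_closed[OF Om_sub] u] e
    by simp
  then show "k \<le> y" using altl_length_bound[OF s t m k ws(1)] ws(2) word_prod_altl by simp
qed

lemma ext_length_S:
  assumes s: "s \<in> S" shows "ext_length W S Omega s = 1"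
proof -
  have sc: "s \<in> carrier W" using s S_carr by (rule subsetD[rotated])
  have m: "cox_m W s s = 1" unfolding cox_m_def using S_inv[OF s] by simp
  have "alt_prod W s s 1 = s" using sc by simp
  moreover have "ext_length W S Omega (alt_prod W s s 1) = 1" using ext_length_alt[OF s s, of 1] m by simp
  ultimately show ?thesis by simp
qed

end


definition Lsign :: "('g, 'c) monoid_scheme \<Rightarrow> ('g \<Rightarrow> nat) \<Rightarrow> ('w \<Rightarrow> 'g) \<Rightarrow> int \<Rightarrow> 'w \<Rightarrow> ('g \<times> bool) list set" where
  "Lsign G len n e s = (if e = 1 then A_gen G len (n s) else inv\<^bsub>A_group G len\<^esub> (A_gen G len (inv\<^bsub>G\<^esub> (n s))))"

fun thw :: "('g, 'c) monoid_scheme \<Rightarrow> ('g \<Rightarrow> nat) \<Rightarrow> ('w \<Rightarrow> 'g) \<Rightarrow> ('g \<Rightarrow> 'w \<Rightarrow> int) \<Rightarrow> 'g \<Rightarrow> 'w list \<Rightarrow> ('g \<times> bool) list set" where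
  "thw G len n ori g [] = \<one>\<^bsub>A_group G len\<^esub>"
| "thw G len n ori g (s # ws) = Lsign G len n (ori g s) s \<otimes>\<^bsub>A_group G len\<^esub> thw G len n ori (g \<otimes>\<^bsub>G\<^esub> n s) ws"

lemma (in group) conj_swap:
  assumes "yy \<otimes> a = b \<otimes> xx" "xx \<in> carrier G" "yy \<in> carrier G" "a \<in> carrier G" "b \<in> carrier G"
  shows "a \<otimes> inv xx = inv yy \<otimes> b"
proof -
  have "a = inv yy \<otimes> (b \<otimes> xx)"
    using assms inv_solve_left by auto
  then have "a \<otimes> inv xx = inv yy \<otimes> (b \<otimes> xx) \<otimes> inv xx" by simp
  also have "\<dots> = inv yy \<otimes> b" using assms by (simp add: m_assoc)
  finally show ?thesis .
qed

definition or2 :: "('a, 'b) monoid_scheme \<Rightarrow> ('a \<Rightarrow> 'a \<Rightarrow> int) \<Rightarrow> 'a \<Rightarrow> 'a \<Rightarrow> 'a \<Rightarrow> bool" where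
  "or2 W ori w s t \<longleftrightarrow>
        (let m = cox_m W s t;
             seq1 = (\<lambda>i. ori (w \<otimes>\<^bsub>W\<^esub> alt_prod W s t i) (if even i then s else t));
             seq2 = (\<lambda>i. ori (w \<otimes>\<^bsub>W\<^esub> alt_prod W t s i) (if even i then t else s))
         in \<exists>k\<le>m.
             ((\<forall>i<m. seq1 i = sign (i < k)) \<and> (\<forall>i<m. seq2 i = - sign (i < m - k))) \<or>
             ((\<forall>i<m. seq1 i = - sign (i < k)) \<and> (\<forall>i<m. seq2 i = sign (i < m - k))))"

lemma orientation_aff_or2:
  "orientation_aff W Waff S ori \<longleftrightarrow>
     (\<forall>w\<in>Waff. \<forall>s\<in>S. ori w s \<in> {1, -1}) \<and>
     (\<forall>w\<in>Waff. \<forall>s\<in>S. ori (w \<otimes>\<^bsub>W\<^esub> s) s = - ori w s) \<and>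
     (\<forall>w\<in>Waff. \<forall>s\<in>S. \<forall>t\<in>S. cox_m W s t \<noteq> 0 \<longrightarrow> or2 W ori w s t)"
  unfolding orientation_aff_def or2_def by (rule refl)

locale procox = extcox W Waff S Omega for W (structure) and Waff S Omega +
  fixes G :: "('g, 'c) monoid_scheme" and prj and n
  assumes ppc: "pro_p_coxeter G W Waff S Omega prj n"
begin

abbreviation "len \<equiv> pro_length W S Omega prj"
abbreviation "AA \<equiv> A_group G len"
abbreviation "TT \<equiv> A_gen G len"
abbreviation "Ls \<equiv> Lsign G len n"
abbreviation "th \<equiv> thw G len n"
abbreviation "PG ws \<equiv> word_prod G (map n ws)"

lemma grpG: "group G" using ppc unfolding pro_p_coxeter_def by (elim conjE)
lemma prj_hom: "prj \<in> hom G W" using ppc unfolding pro_p_coxeter_def by (elim conjE)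
lemma prj_surj: "prj ` carrier G = carrier W" using ppc unfolding pro_p_coxeter_def by (elim conjE)
lemma n_all: "\<forall>s\<in>S. n s \<in> carrier G \<and> prj (n s) = s" using ppc unfolding pro_p_coxeter_def by (elim conjE)

sublocale G: group G by (rule grpG)
sublocale P: group_hom G W prj
  by (simp add: group_hom_def group_hom_axioms_def grpG prj_hom is_group)
sublocale A: group AA by (rule G.group_A)

lemma n_carr: "s \<in> S \<Longrightarrow> n s \<in> carrier G" using n_all by blast
lemma prj_n: "s \<in> S \<Longrightarrow> prj (n s) = s" using n_all by blast
lemma S_c: "s \<in> S \<Longrightarrow> s \<in> carrier W" using S_carr by (rule subsetD)


lemma map_n_lists: "ws \<in> lists S \<Longrightarrow> map n ws \<in> lists (carrier G)"
  by (induct ws) (auto simp: n_carr)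

lemma PG_append: "ws \<in> lists S \<Longrightarrow> vs \<in> lists S \<Longrightarrow> PG (ws @ vs) = PG ws \<otimes>\<^bsub>G\<^esub> PG vs"
  unfolding map_append by (rule G.word_prod_append[OF map_n_lists map_n_lists])

lemma PG_closed: "ws \<in> lists S \<Longrightarrow> PG ws \<in> carrier G"
  by (rule G.word_prod_closed[OF map_n_lists])

lemma prj_PG: "ws \<in> lists S \<Longrightarrow> prj (PG ws) = word_prod W ws"
proof (induct ws)
  case Nil then show ?case by (simp add: word_prod_def)
next
  case (Cons a ws)
  then show ?case using PG_closed[of ws] by (simp add: G.word_prod_Cons word_prod_Cons n_carr prj_n)
qed

lemma len_def': "len g = ext_length W S Omega (prj g)" by (simp add: pro_length_def)

lemma len_Om: "g \<in> carrier G \<Longrightarrow> prj g \<in> Omega \<Longrightarrow> len g = 0"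
  by (simp add: len_def' ext_length_Om)

lemma len_SOm: "g \<in> carrier G \<Longrightarrow> s \<in> S \<Longrightarrow> u \<in> Omega \<Longrightarrow> prj g = s \<otimes> u \<Longrightarrow> len g = 1"
  by (simp add: len_def' ext_length_mult_Om S_c ext_length_S)

lemma len_mult_Om:
  assumes "g \<in> carrier G" "v \<in> carrier G" "prj v \<in> Omega"
  shows "len (g \<otimes>\<^bsub>G\<^esub> v) = len g"
  using assms by (simp add: len_def' ext_length_mult_Om)

lemma len_Om_mult:
  assumes "g \<in> carrier G" "v \<in> carrier G" "prj v = \<one>"
  shows "len (v \<otimes>\<^bsub>G\<^esub> g) = len g"
  using assms by (simp add: len_def')

lemma one_Om: "\<one> \<in> Omega" by (rule subgroup.one_closed[OF Om_sub])

lemma TT_carr: "x \<in> carrier G \<Longrightarrow> TT x \<in> carrier AA"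
  by (rule G.A_gen_carrier)

lemma TT_mult: "x \<in> carrier G \<Longrightarrow> y \<in> carrier G \<Longrightarrow> len (x \<otimes>\<^bsub>G\<^esub> y) = len x + len y \<Longrightarrow>
    TT x \<otimes>\<^bsub>AA\<^esub> TT y = TT (x \<otimes>\<^bsub>G\<^esub> y)"
  by (rule G.A_gen_mult)

lemma TT_one: "TT \<one>\<^bsub>G\<^esub> = \<one>\<^bsub>AA\<^esub>"
proof -
  have "TT \<one>\<^bsub>G\<^esub> \<otimes>\<^bsub>AA\<^esub> TT \<one>\<^bsub>G\<^esub> = TT \<one>\<^bsub>G\<^esub>"
    using TT_mult[of "\<one>\<^bsub>G\<^esub>" "\<one>\<^bsub>G\<^esub>"] len_Om[of "\<one>\<^bsub>G\<^esub>"] one_Om by simp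
  then show ?thesis using TT_carr[of "\<one>\<^bsub>G\<^esub>"] by simp
qed

lemma Ls_carr: "s \<in> S \<Longrightarrow> Ls e s \<in> carrier AA"
  by (simp add: Lsign_def TT_carr n_carr)

lemma th_carr: "ws \<in> lists S \<Longrightarrow> th ori g ws \<in> carrier AA"
  by (induct ws arbitrary: g) (auto simp: Ls_carr)

lemma th_append:
  "a \<in> lists S \<Longrightarrow> b \<in> lists S \<Longrightarrow> g \<in> carrier G \<Longrightarrow> th ori g (a @ b) = th ori g a \<otimes>\<^bsub>AA\<^esub> th ori (g \<otimes>\<^bsub>G\<^esub> PG a) b"
proof (induct a arbitrary: g)
  case Nil then show ?case by (simp add: word_prod_def th_carr)
next
  case (Cons s a)
  have s: "s \<in> S" and a: "a \<in> lists S" using Cons by auto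
  have gs: "g \<otimes>\<^bsub>G\<^esub> n s \<in> carrier G" using Cons s n_carr by simp
  have "th ori g ((s # a) @ b) = Ls (ori g s) s \<otimes>\<^bsub>AA\<^esub> (th ori (g \<otimes>\<^bsub>G\<^esub> n s) a \<otimes>\<^bsub>AA\<^esub> th ori (g \<otimes>\<^bsub>G\<^esub> n s \<otimes>\<^bsub>G\<^esub> PG a) b)"
    using Cons.hyps[OF a Cons.prems(2) gs] by simp
  also have "g \<otimes>\<^bsub>G\<^esub> n s \<otimes>\<^bsub>G\<^esub> PG a = g \<otimes>\<^bsub>G\<^esub> PG (s # a)"
    using Cons s n_carr PG_closed[OF a] by (simp add: G.word_prod_Cons G.m_assoc)
  finally show ?case using s a Cons.prems(2) by (simp add: A.m_assoc Ls_carr th_carr)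
qed

abbreviation rep :: "('g \<Rightarrow> 'a \<Rightarrow> int) \<Rightarrow> ('a \<Rightarrow> 'a \<Rightarrow> int) \<Rightarrow> bool" where
  "rep ori Or \<equiv> \<forall>h\<in>carrier G. \<forall>s\<in>S. ori h s = Or (prj h) s"

lemma th_prj:
  assumes "rep ori Or" "ws \<in> lists S" "g \<in> carrier G" "g' \<in> carrier G" "prj g = prj g'"
  shows "th ori g ws = th ori g' ws"
  using assms(2-)
proof (induct ws arbitrary: g g')
  case Nil then show ?case by simp
next
  case (Cons s ws)
  have s: "s \<in> S" and ws: "ws \<in> lists S" using Cons by auto
  have "ori g s = ori g' s" using assms(1) Cons s by simp
  moreover have "th ori (g \<otimes>\<^bsub>G\<^esub> n s) ws = th ori (g' \<otimes>\<^bsub>G\<^esub> n s) ws"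
    using Cons.hyps(3) Cons.prems s n_carr by simp
  ultimately show ?case by simp
qed

lemma (in group) cancel_helpers:
  "x \<in> carrier G \<Longrightarrow> y \<in> carrier G \<Longrightarrow> x \<otimes> (inv x \<otimes> y) = y"
  "x \<in> carrier G \<Longrightarrow> y \<in> carrier G \<Longrightarrow> inv x \<otimes> (x \<otimes> y) = y"
  by (simp_all add: m_assoc[symmetric])

lemma Ls_kernel:
  assumes tau: "tau \<in> carrier G" "prj tau = \<one>" and s: "s \<in> S"
  shows "TT tau \<otimes>\<^bsub>AA\<^esub> Ls e s = Ls e s \<otimes>\<^bsub>AA\<^esub> TT (inv\<^bsub>G\<^esub> (n s) \<otimes>\<^bsub>G\<^esub> tau \<otimes>\<^bsub>G\<^esub> n s)"
proof -
  let ?ns = "n s"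
  let ?t' = "inv\<^bsub>G\<^esub> ?ns \<otimes>\<^bsub>G\<^esub> tau \<otimes>\<^bsub>G\<^esub> ?ns"
  have ns: "?ns \<in> carrier G" using n_carr[OF s] .
  have sc: "s \<in> carrier W" using S_c[OF s] .
  have t'c: "?t' \<in> carrier G" using ns tau by simp
  have pt': "prj ?t' = \<one>" using ns tau sc by (simp add: prj_n[OF s])
  have lt: "len tau = 0" using len_Om tau one_Om by simp
  have lt': "len ?t' = 0" using len_Om t'c pt' one_Om by simp
  have lns: "len ?ns = 1" using len_SOm[OF ns s one_Om] prj_n[OF s] sc by simp
  have ins: "inv\<^bsub>G\<^esub> ?ns \<in> carrier G" using ns by simp
  have "prj (inv\<^bsub>G\<^esub> ?ns) = s \<otimes> \<one>" using P.hom_inv[OF ns] prj_n[OF s] sc S_invS[OF s] by simp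
  then have lins: "len (inv\<^bsub>G\<^esub> ?ns) = 1" using len_SOm[OF ins s one_Om] by simp
  show ?thesis
  proof (cases "e = 1")
    case True
    have "TT tau \<otimes>\<^bsub>AA\<^esub> TT ?ns = TT (tau \<otimes>\<^bsub>G\<^esub> ?ns)"
      using TT_mult[OF tau(1) ns] len_Om_mult[OF ns tau(1) tau(2)] lt by simp
    also have "tau \<otimes>\<^bsub>G\<^esub> ?ns = ?ns \<otimes>\<^bsub>G\<^esub> ?t'"
      using ns tau by (simp add: G.m_assoc G.cancel_helpers)
    also have "TT (?ns \<otimes>\<^bsub>G\<^esub> ?t') = TT ?ns \<otimes>\<^bsub>AA\<^esub> TT ?t'"
      using TT_mult[OF ns t'c] len_mult_Om[OF ns t'c] pt' one_Om lt' by simp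
    finally show ?thesis using True by (simp add: Lsign_def)
  next
    case False
    let ?X = "TT (inv\<^bsub>G\<^esub> ?ns)"
    have 1: "?X \<otimes>\<^bsub>AA\<^esub> TT tau = TT (inv\<^bsub>G\<^esub> ?ns \<otimes>\<^bsub>G\<^esub> tau)"
      using TT_mult[OF ins tau(1)] len_mult_Om[OF ins tau(1)] tau one_Om lt by simp
    have 2: "TT ?t' \<otimes>\<^bsub>AA\<^esub> ?X = TT (?t' \<otimes>\<^bsub>G\<^esub> inv\<^bsub>G\<^esub> ?ns)"
      using TT_mult[OF t'c ins] len_Om_mult[OF ins t'c pt'] lt' by simp
    have 3: "?t' \<otimes>\<^bsub>G\<^esub> inv\<^bsub>G\<^esub> ?ns = inv\<^bsub>G\<^esub> ?ns \<otimes>\<^bsub>G\<^esub> tau"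
      using ns tau by (simp add: G.m_assoc)
    have "TT tau \<otimes>\<^bsub>AA\<^esub> inv\<^bsub>AA\<^esub> ?X = inv\<^bsub>AA\<^esub> ?X \<otimes>\<^bsub>AA\<^esub> TT ?t'"
      by (rule A.conj_swap) (use 1 2 3 TT_carr ins tau t'c in auto)
    then show ?thesis using False by (simp add: Lsign_def)
  qed
qed

lemma th_kernel:
  assumes "b \<in> lists S" "tau \<in> carrier G" "prj tau = \<one>"
  shows "TT tau \<otimes>\<^bsub>AA\<^esub> th ori g b = th ori g b \<otimes>\<^bsub>AA\<^esub> TT (inv\<^bsub>G\<^esub> (PG b) \<otimes>\<^bsub>G\<^esub> tau \<otimes>\<^bsub>G\<^esub> PG b)"
  using assms
proof (induct b arbitrary: tau g)
  case Nil then show ?case by (simp add: TT_carr)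
next
  case (Cons s b)
  have s: "s \<in> S" and b: "b \<in> lists S" using Cons by auto
  let ?ns = "n s"
  let ?t1 = "inv\<^bsub>G\<^esub> ?ns \<otimes>\<^bsub>G\<^esub> tau \<otimes>\<^bsub>G\<^esub> ?ns"
  have ns: "?ns \<in> carrier G" using n_carr[OF s] .
  have t1c: "?t1 \<in> carrier G" using ns Cons.prems by simp
  have pt1: "prj ?t1 = \<one>" using ns Cons.prems S_c[OF s] by (simp add: prj_n[OF s])
  have IH: "TT ?t1 \<otimes>\<^bsub>AA\<^esub> th ori (g \<otimes>\<^bsub>G\<^esub> ?ns) b = th ori (g \<otimes>\<^bsub>G\<^esub> ?ns) b \<otimes>\<^bsub>AA\<^esub> TT (inv\<^bsub>G\<^esub> (PG b) \<otimes>\<^bsub>G\<^esub> ?t1 \<otimes>\<^bsub>G\<^esub> PG b)"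
    using Cons.hyps(3)[OF t1c pt1] .
  have e: "inv\<^bsub>G\<^esub> (PG (s # b)) \<otimes>\<^bsub>G\<^esub> tau \<otimes>\<^bsub>G\<^esub> PG (s # b) = inv\<^bsub>G\<^esub> (PG b) \<otimes>\<^bsub>G\<^esub> ?t1 \<otimes>\<^bsub>G\<^esub> PG b"
    using ns PG_closed[OF b] Cons.prems by (simp add: G.word_prod_Cons G.inv_mult_group G.m_assoc)
  have K: "TT tau \<otimes>\<^bsub>AA\<^esub> Ls (ori g s) s = Ls (ori g s) s \<otimes>\<^bsub>AA\<^esub> TT ?t1"
    using Ls_kernel[OF Cons.prems(1,2) s] .
  have c: "TT tau \<in> carrier AA" "Ls (ori g s) s \<in> carrier AA" "TT ?t1 \<in> carrier AA"
     "th ori (g \<otimes>\<^bsub>G\<^esub> ?ns) b \<in> carrier AA"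
    using TT_carr Cons.prems t1c Ls_carr[OF s] th_carr[OF b] by auto
  have "TT tau \<otimes>\<^bsub>AA\<^esub> th ori g (s # b) = (TT tau \<otimes>\<^bsub>AA\<^esub> Ls (ori g s) s) \<otimes>\<^bsub>AA\<^esub> th ori (g \<otimes>\<^bsub>G\<^esub> ?ns) b"
    using c by (simp add: A.m_assoc)
  also have "\<dots> = Ls (ori g s) s \<otimes>\<^bsub>AA\<^esub> (TT ?t1 \<otimes>\<^bsub>AA\<^esub> th ori (g \<otimes>\<^bsub>G\<^esub> ?ns) b)"
    using c K by (simp add: A.m_assoc)
  also have "\<dots> = th ori g (s # b) \<otimes>\<^bsub>AA\<^esub> TT (inv\<^bsub>G\<^esub> (PG (s # b)) \<otimes>\<^bsub>G\<^esub> tau \<otimes>\<^bsub>G\<^esub> PG (s # b))"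
    unfolding IH e using c PG_closed[OF b] t1c TT_carr by (simp add: A.m_assoc)
  finally show ?case .
qed

definition cj :: "'a \<Rightarrow> 'a \<Rightarrow> 'a" where "cj u s = u \<otimes> s \<otimes> inv u"

lemma cj_S: "u \<in> Omega \<Longrightarrow> s \<in> S \<Longrightarrow> cj u s \<in> S"
  unfolding cj_def by (rule Om_conj)

lemma Ls_Om:
  assumes v: "v \<in> carrier G" "prj v = u" "u \<in> Omega" and s: "s \<in> S"
  defines "s' \<equiv> cj u s"
  shows "TT v \<otimes>\<^bsub>AA\<^esub> Ls e s = Ls e s' \<otimes>\<^bsub>AA\<^esub> TT (inv\<^bsub>G\<^esub> (n s') \<otimes>\<^bsub>G\<^esub> v \<otimes>\<^bsub>G\<^esub> n s)"
proof -
  have s'S: "s' \<in> S" unfolding s'_def using cj_S v s by simp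
  let ?v1 = "inv\<^bsub>G\<^esub> (n s') \<otimes>\<^bsub>G\<^esub> v \<otimes>\<^bsub>G\<^esub> n s"
  have ns: "n s \<in> carrier G" "n s' \<in> carrier G" using n_carr s s'S by auto
  have uc: "u \<in> carrier W" using Om_carr v by simp
  have sc: "s \<in> carrier W" "s' \<in> carrier W" using S_c s s'S by auto
  have v1c: "?v1 \<in> carrier G" using ns v by simp
  have us: "u \<otimes> s = s' \<otimes> u" unfolding s'_def cj_def using uc sc by (simp add: m_assoc)
  have pv1: "prj ?v1 = u"
  proof -
    have "prj ?v1 = inv s' \<otimes> u \<otimes> s" using ns v by (simp add: prj_n s s'S)
    also have "\<dots> = inv s' \<otimes> (s' \<otimes> u)" using uc sc us by (simp add: m_assoc)
    finally show ?thesis using uc sc by (simp add: cancel_helpers)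
  qed
  have lv: "len v = 0" using len_Om v by simp
  have lv1: "len ?v1 = 0" using len_Om v1c pv1 v by simp
  have lns: "len (n s) = 1" "len (n s') = 1"
    using len_SOm[OF ns(1) s one_Om] len_SOm[OF ns(2) s'S one_Om] prj_n s s'S sc by auto
  have ins: "inv\<^bsub>G\<^esub> (n s) \<in> carrier G" "inv\<^bsub>G\<^esub> (n s') \<in> carrier G" using ns by auto
  show ?thesis
  proof (cases "e = 1")
    case True
    have l1: "len (v \<otimes>\<^bsub>G\<^esub> n s) = 1"
      by (rule len_SOm[OF _ s'S v(3)]) (use v ns us prj_n[OF s] in auto)
    have e1: "v \<otimes>\<^bsub>G\<^esub> n s = n s' \<otimes>\<^bsub>G\<^esub> ?v1" using ns v by (simp add: G.m_assoc G.cancel_helpers)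
    have "TT v \<otimes>\<^bsub>AA\<^esub> TT (n s) = TT (v \<otimes>\<^bsub>G\<^esub> n s)"
      using TT_mult[OF v(1) ns(1)] l1 lv lns by simp
    also have "\<dots> = TT (n s') \<otimes>\<^bsub>AA\<^esub> TT ?v1"
      using TT_mult[OF ns(2) v1c] e1 l1 lv1 lns by simp
    finally show ?thesis using True by (simp add: Lsign_def s'_def)
  next
    case False
    let ?X = "TT (inv\<^bsub>G\<^esub> (n s))"
    let ?Y = "TT (inv\<^bsub>G\<^esub> (n s'))"
    have pins: "prj (inv\<^bsub>G\<^esub> (n s)) = s" "prj (inv\<^bsub>G\<^esub> (n s')) = s'"
      using ns prj_n s s'S S_invS by auto
    have lins: "len (inv\<^bsub>G\<^esub> (n s)) = 1" "len (inv\<^bsub>G\<^esub> (n s')) = 1"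
      using len_SOm[OF ins(1) s one_Om] len_SOm[OF ins(2) s'S one_Om] pins sc by auto
    have l2: "len (inv\<^bsub>G\<^esub> (n s') \<otimes>\<^bsub>G\<^esub> v) = 1"
      by (rule len_SOm[OF _ s'S v(3)]) (use v ins pins in auto)
    have e2: "?v1 \<otimes>\<^bsub>G\<^esub> inv\<^bsub>G\<^esub> (n s) = inv\<^bsub>G\<^esub> (n s') \<otimes>\<^bsub>G\<^esub> v" using ns v by (simp add: G.m_assoc)
    have 1: "?Y \<otimes>\<^bsub>AA\<^esub> TT v = TT (inv\<^bsub>G\<^esub> (n s') \<otimes>\<^bsub>G\<^esub> v)"
      using TT_mult[OF ins(2) v(1)] l2 lins lv by simp
    have 2: "TT ?v1 \<otimes>\<^bsub>AA\<^esub> ?X = TT (inv\<^bsub>G\<^esub> (n s') \<otimes>\<^bsub>G\<^esub> v)"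
      using TT_mult[OF v1c ins(1)] e2 l2 lins lv1 by simp
    have "TT v \<otimes>\<^bsub>AA\<^esub> inv\<^bsub>AA\<^esub> ?X = inv\<^bsub>AA\<^esub> ?Y \<otimes>\<^bsub>AA\<^esub> TT ?v1"
      by (rule A.conj_swap) (use 1 2 TT_carr ins v v1c in auto)
    then show ?thesis using False by (simp add: Lsign_def s'_def)
  qed
qed

definition good_or :: "('a \<Rightarrow> 'a \<Rightarrow> int) \<Rightarrow> bool" where
  "good_or Or \<longleftrightarrow> (\<forall>x\<in>carrier W. \<forall>s\<in>S. Or x s \<in> {1, -1}) \<and>
     (\<forall>x\<in>carrier W. \<forall>s\<in>S. Or (x \<otimes> s) s = - Or x s) \<and>
     (\<forall>x\<in>carrier W. \<forall>u\<in>Omega. \<forall>s\<in>S. Or (x \<otimes> u) s = Or x (cj u s)) \<and>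
     (\<forall>x\<in>carrier W. \<forall>s\<in>S. \<forall>t\<in>S. cox_m W s t \<noteq> 0 \<longrightarrow> or2 W Or x s t)"

lemma good_P1: "good_or Or \<Longrightarrow> x \<in> carrier W \<Longrightarrow> s \<in> S \<Longrightarrow> Or (x \<otimes> s) s = - Or x s"
  unfolding good_or_def by blast
lemma good_P2: "good_or Or \<Longrightarrow> x \<in> carrier W \<Longrightarrow> u \<in> Omega \<Longrightarrow> s \<in> S \<Longrightarrow> Or (x \<otimes> u) s = Or x (cj u s)"
  unfolding good_or_def by blast
lemma good_P3: "good_or Or \<Longrightarrow> x \<in> carrier W \<Longrightarrow> s \<in> S \<Longrightarrow> t \<in> S \<Longrightarrow> cox_m W s t \<noteq> 0 \<Longrightarrow> or2 W Or x s t"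
  unfolding good_or_def by blast
lemma good_P0: "good_or Or \<Longrightarrow> x \<in> carrier W \<Longrightarrow> s \<in> S \<Longrightarrow> Or x s \<in> {1, -1}"
  unfolding good_or_def by blast

lemma v1_facts:
  assumes v: "v \<in> carrier G" "prj v = u" "u \<in> Omega" and s: "s \<in> S"
  shows "inv\<^bsub>G\<^esub> (n (cj u s)) \<otimes>\<^bsub>G\<^esub> v \<otimes>\<^bsub>G\<^esub> n s \<in> carrier G"
    "prj (inv\<^bsub>G\<^esub> (n (cj u s)) \<otimes>\<^bsub>G\<^esub> v \<otimes>\<^bsub>G\<^esub> n s) = u"
    "v \<otimes>\<^bsub>G\<^esub> n s = n (cj u s) \<otimes>\<^bsub>G\<^esub> (inv\<^bsub>G\<^esub> (n (cj u s)) \<otimes>\<^bsub>G\<^esub> v \<otimes>\<^bsub>G\<^esub> n s)"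
proof -
  let ?s' = "cj u s"
  have s'S: "?s' \<in> S" using cj_S v s by simp
  have ns: "n s \<in> carrier G" "n ?s' \<in> carrier G" using n_carr s s'S by auto
  have uc: "u \<in> carrier W" using Om_carr v by simp
  have sc: "s \<in> carrier W" "?s' \<in> carrier W" using S_c s s'S by auto
  have us: "u \<otimes> s = ?s' \<otimes> u" unfolding cj_def using uc sc by (simp add: m_assoc)
  show "inv\<^bsub>G\<^esub> (n ?s') \<otimes>\<^bsub>G\<^esub> v \<otimes>\<^bsub>G\<^esub> n s \<in> carrier G" using ns v by simp
  have "prj (inv\<^bsub>G\<^esub> (n ?s') \<otimes>\<^bsub>G\<^esub> v \<otimes>\<^bsub>G\<^esub> n s) = inv ?s' \<otimes> u \<otimes> s" using ns v by (simp add: prj_n s s'S)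
  also have "\<dots> = inv ?s' \<otimes> (?s' \<otimes> u)" using uc sc us by (simp add: m_assoc)
  finally show "prj (inv\<^bsub>G\<^esub> (n ?s') \<otimes>\<^bsub>G\<^esub> v \<otimes>\<^bsub>G\<^esub> n s) = u" using uc sc by (simp add: cancel_helpers)
  show "v \<otimes>\<^bsub>G\<^esub> n s = n ?s' \<otimes>\<^bsub>G\<^esub> (inv\<^bsub>G\<^esub> (n ?s') \<otimes>\<^bsub>G\<^esub> v \<otimes>\<^bsub>G\<^esub> n s)"
    using ns v by (simp add: G.m_assoc G.cancel_helpers)
qed

lemma th_Om:
  assumes rep: "rep ori Or" and go: "good_or Or" and u: "u \<in> Omega"
  shows "ws \<in> lists S \<Longrightarrow> g \<in> carrier G \<Longrightarrow> v \<in> carrier G \<Longrightarrow> prj v = u \<Longrightarrow>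
    \<exists>v''. v'' \<in> carrier G \<and> prj v'' = u \<and> v \<otimes>\<^bsub>G\<^esub> PG ws = PG (map (cj u) ws) \<otimes>\<^bsub>G\<^esub> v'' \<and>
       TT v \<otimes>\<^bsub>AA\<^esub> th ori (g \<otimes>\<^bsub>G\<^esub> v) ws = th ori g (map (cj u) ws) \<otimes>\<^bsub>AA\<^esub> TT v''"
proof (induct ws arbitrary: g v)
  case Nil
  then show ?case by (intro exI[of _ v]) (simp add: TT_carr)
next
  case (Cons s ws)
  have s: "s \<in> S" and ws: "ws \<in> lists S" using Cons.prems by auto
  let ?s' = "cj u s"
  let ?v1 = "inv\<^bsub>G\<^esub> (n ?s') \<otimes>\<^bsub>G\<^esub> v \<otimes>\<^bsub>G\<^esub> n s"
  have s'S: "?s' \<in> S" using cj_S u s by simp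
  have vf: "?v1 \<in> carrier G" "prj ?v1 = u" "v \<otimes>\<^bsub>G\<^esub> n s = n ?s' \<otimes>\<^bsub>G\<^esub> ?v1"
    using v1_facts[OF Cons.prems(3,4) u s] by auto
  have ns: "n s \<in> carrier G" "n ?s' \<in> carrier G" using n_carr s s'S by auto
  have g: "g \<in> carrier G" "v \<in> carrier G" using Cons.prems by auto
  have gs': "g \<otimes>\<^bsub>G\<^esub> n ?s' \<in> carrier G" using g ns by simp
  obtain v'' where v'': "v'' \<in> carrier G" "prj v'' = u"
    "?v1 \<otimes>\<^bsub>G\<^esub> PG ws = PG (map (cj u) ws) \<otimes>\<^bsub>G\<^esub> v''"
    "TT ?v1 \<otimes>\<^bsub>AA\<^esub> th ori ((g \<otimes>\<^bsub>G\<^esub> n ?s') \<otimes>\<^bsub>G\<^esub> ?v1) ws = th ori (g \<otimes>\<^bsub>G\<^esub> n ?s') (map (cj u) ws) \<otimes>\<^bsub>AA\<^esub> TT v''"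
    using Cons.hyps[OF ws gs' vf(1,2)] by blast
  have sign: "ori (g \<otimes>\<^bsub>G\<^esub> v) s = ori g ?s'"
  proof -
    have "ori (g \<otimes>\<^bsub>G\<^esub> v) s = Or (prj g \<otimes> u) s" using rep g s Cons.prems(4) by simp
    also have "\<dots> = Or (prj g) ?s'" using good_P2[OF go _ u s] g by simp
    also have "\<dots> = ori g ?s'" using rep g s'S by simp
    finally show ?thesis .
  qed
  have gvs: "g \<otimes>\<^bsub>G\<^esub> v \<otimes>\<^bsub>G\<^esub> n s = (g \<otimes>\<^bsub>G\<^esub> n ?s') \<otimes>\<^bsub>G\<^esub> ?v1"
    using vf(3) g ns vf(1) by (simp add: G.m_assoc)
  have cw: "map (cj u) ws \<in> lists S" using ws cj_S[OF u] by auto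
  have c: "TT v \<in> carrier AA" "Ls (ori g ?s') s \<in> carrier AA" "Ls (ori g ?s') ?s' \<in> carrier AA"
    "TT ?v1 \<in> carrier AA" "TT v'' \<in> carrier AA"
    "th ori (g \<otimes>\<^bsub>G\<^esub> v \<otimes>\<^bsub>G\<^esub> n s) ws \<in> carrier AA"
    "th ori (g \<otimes>\<^bsub>G\<^esub> n ?s') (map (cj u) ws) \<in> carrier AA"
    using TT_carr g vf v'' Ls_carr s s'S th_carr ws cw by auto
  have LO: "TT v \<otimes>\<^bsub>AA\<^esub> Ls (ori g ?s') s = Ls (ori g ?s') ?s' \<otimes>\<^bsub>AA\<^esub> TT ?v1"
    using Ls_Om[OF g(2) Cons.prems(4) u s] by simp
  have "TT v \<otimes>\<^bsub>AA\<^esub> th ori (g \<otimes>\<^bsub>G\<^esub> v) (s # ws)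
      = (TT v \<otimes>\<^bsub>AA\<^esub> Ls (ori g ?s') s) \<otimes>\<^bsub>AA\<^esub> th ori (g \<otimes>\<^bsub>G\<^esub> v \<otimes>\<^bsub>G\<^esub> n s) ws"
    using sign c by (simp add: A.m_assoc)
  also have "\<dots> = Ls (ori g ?s') ?s' \<otimes>\<^bsub>AA\<^esub> (TT ?v1 \<otimes>\<^bsub>AA\<^esub> th ori ((g \<otimes>\<^bsub>G\<^esub> n ?s') \<otimes>\<^bsub>G\<^esub> ?v1) ws)"
    unfolding LO gvs[symmetric] using c by (simp add: A.m_assoc)
  also have "\<dots> = th ori g (map (cj u) (s # ws)) \<otimes>\<^bsub>AA\<^esub> TT v''"
    unfolding v''(4) using c by (simp add: A.m_assoc)
  finally have E1: "TT v \<otimes>\<^bsub>AA\<^esub> th ori (g \<otimes>\<^bsub>G\<^esub> v) (s # ws) = th ori g (map (cj u) (s # ws)) \<otimes>\<^bsub>AA\<^esub> TT v''" .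
  have E2: "v \<otimes>\<^bsub>G\<^esub> PG (s # ws) = PG (map (cj u) (s # ws)) \<otimes>\<^bsub>G\<^esub> v''"
  proof -
    have "v \<otimes>\<^bsub>G\<^esub> PG (s # ws) = (v \<otimes>\<^bsub>G\<^esub> n s) \<otimes>\<^bsub>G\<^esub> PG ws"
      using g ns PG_closed[OF ws] by (simp add: G.word_prod_Cons G.m_assoc)
    also have "\<dots> = n ?s' \<otimes>\<^bsub>G\<^esub> (?v1 \<otimes>\<^bsub>G\<^esub> PG ws)"
      unfolding vf(3) using ns vf(1) PG_closed[OF ws] by (simp add: G.m_assoc)
    also have "\<dots> = PG (map (cj u) (s # ws)) \<otimes>\<^bsub>G\<^esub> v''"
      unfolding v''(3) using ns v''(1) PG_closed[OF cw] by (simp add: G.word_prod_Cons G.m_assoc)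
    finally show ?thesis .
  qed
  show ?case using E1 E2 v'' by blast
qed

end


definition cc :: "'a \<Rightarrow> 'a \<Rightarrow> nat \<Rightarrow> 'a" where "cc s t i = (if even i then s else t)"

lemma cc_SS[simp]: "cc s t (Suc (Suc i)) = cc s t i" by (simp add: cc_def)
lemma cc_0[simp]: "cc s t 0 = s" by (simp add: cc_def)
lemma cc_1[simp]: "cc s t (Suc 0) = t" by (simp add: cc_def)
lemma cc_S: "cc s t i \<in> {s, t}" by (simp add: cc_def)

lemma map_cc_upt: "map (cc s t) [a..<a+j] = altl (cc s t a) (cc s t (Suc a)) j"
proof (induct j arbitrary: a)
  case 0 then show ?case by simp
next
  case (Suc j)
  have "[a..<a + Suc j] = a # [Suc a..<Suc a + j]" by (simp add: upt_conv_Cons)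
  then show ?case using Suc[of "Suc a"] by simp
qed

lemma altl_cc: "altl s t q = map (cc s t) [0..<q]"
  using map_cc_upt[of s t 0 q] by simp

lemma map_cc_rev: "map (cc s t) (rev [a..<a+j]) = altl (cc s t (a+j+1)) (cc s t (a+j)) j"
proof (induct j)
  case 0 then show ?case by simp
next
  case (Suc j)
  have "rev [a..<a + Suc j] = (a + j) # rev [a..<a+j]" by simp
  moreover have "cc s t (a + Suc j + 1) = cc s t (a + j)"
    using cc_SS[of s t "a + j"] by (simp add: add.commute)
  ultimately show ?case using Suc by simp
qed

lemma take_altl: "i \<le> q \<Longrightarrow> take i (altl x y q) = altl x y i"
proof (induct q arbitrary: i x y)
  case 0 then show ?case by simp
next
  case (Suc q)
  show ?case
  proof (cases i)
    case 0 then show ?thesis by simp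
  next
    case (Suc i')
    then have "i' \<le> q" using Suc.prems by simp
    then show ?thesis using Suc.hyps[of i' y x] \<open>i = Suc i'\<close> by simp
  qed
qed

lemma nth_altl_cc: "i < q \<Longrightarrow> altl s t q ! i = cc s t i"
  by (simp add: altl_nth cc_def)

lemma cc_parity: "j < m \<Longrightarrow> cc s t (m + j) = cc t s (m - Suc j)"
proof -
  assume "j < m"
  then obtain d where d: "m = Suc (j + d)" using less_imp_Suc_add by blast
  then have "m + j = Suc (d + 2 * j)" "m - Suc j = d" by simp_all
  then show ?thesis by (simp add: cc_def)
qed

context group
begin

lemma alt_split:
  "x \<in> carrier G \<Longrightarrow> y \<in> carrier G \<Longrightarrow>
   alt_prod G x y (i + l) = alt_prod G x y i \<otimes> (if even i then alt_prod G x y l else alt_prod G y x l)"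
proof (induct i arbitrary: x y)
  case 0 then show ?case by (simp add: alt_closed)
next
  case (Suc i)
  have "alt_prod G x y (Suc i + l) = x \<otimes> alt_prod G y x (i + l)" by simp
  also have "\<dots> = x \<otimes> (alt_prod G y x i \<otimes> (if even i then alt_prod G y x l else alt_prod G x y l))"
    using Suc.hyps[of y x] Suc.prems by simp
  finally show ?case using Suc.prems by (simp add: m_assoc alt_closed)
qed

lemma alt_inv:
  assumes "x \<in> carrier G" "y \<in> carrier G" "x \<otimes> x = \<one>" "y \<otimes> y = \<one>"
  shows "inv (alt_prod G x y l) = (if even l then alt_prod G y x l else alt_prod G x y l)"
  using assms
proof (induct l arbitrary: x y)
  case 0 then show ?case by simp
next
  case (Suc l)
  have ix: "inv x = x" using Suc.prems by (simp add: inv_equality)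
  have "inv (alt_prod G x y (Suc l)) = inv (alt_prod G y x l) \<otimes> inv x"
    using Suc.prems by (simp add: inv_mult_group alt_closed)
  also have "\<dots> = (if even l then alt_prod G x y l else alt_prod G y x l) \<otimes> x"
    using Suc.hyps[of y x] Suc.prems ix by simp
  also have "\<dots> = (if even (Suc l) then alt_prod G y x (Suc l) else alt_prod G x y (Suc l))"
    using alt_Suc_right[of x y l] alt_Suc_right[of y x l] Suc.prems by simp
  finally show ?case .
qed

end

context procox
begin

lemma cc_in_S: "s \<in> S \<Longrightarrow> t \<in> S \<Longrightarrow> cc s t i \<in> S"
  by (simp add: cc_def)

lemma alt_braid:
  assumes s: "s \<in> S" and t: "t \<in> S" and m: "cox_m W s t \<noteq> 0"
  shows "alt_prod W s t (cox_m W s t) = alt_prod W t s (cox_m W s t)"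
proof -
  let ?m = "cox_m W s t"
  have sc: "s \<in> carrier W" "t \<in> carrier W" using S_c s t by auto
  have pm: "(s \<otimes> t) [^] ?m = \<one>" unfolding cox_m_def using sc by simp
  have "alt_prod W s t (2 * ?m + 0) = (s \<otimes> t) [^] ?m \<otimes> alt_prod W s t 0"
    by (rule alt_add_even[OF sc])
  then have one: "alt_prod W s t (?m + ?m) = \<one>" using pm by (simp add: mult_2)
  have "alt_prod W s t (?m + ?m) = alt_prod W s t ?m \<otimes> inv (alt_prod W t s ?m)"
    using alt_split[OF sc, of ?m ?m] alt_inv[of t s ?m] sc S_inv s t by simp
  then have "alt_prod W s t ?m \<otimes> inv (alt_prod W t s ?m) = \<one>" using one by simp
  then show ?thesis using inv_solve_right'[of \<one> "alt_prod W s t ?m" "alt_prod W t s ?m"] sc alt_closed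
    by simp
qed

lemma alt_reflect:
  assumes s: "s \<in> S" and t: "t \<in> S" and m: "cox_m W s t \<noteq> 0" and j: "j \<le> cox_m W s t"
  shows "alt_prod W s t (cox_m W s t + j) = alt_prod W t s (cox_m W s t - j)"
  using j
proof (induct j)
  case 0 then show ?case using alt_braid[OF s t m] by simp
next
  case (Suc j)
  let ?m = "cox_m W s t"
  have sc: "s \<in> carrier W" "t \<in> carrier W" using S_c s t by auto
  have jm: "j < ?m" using Suc by simp
  have c: "cc s t (?m + j) = cc t s (?m - Suc j)" by (rule cc_parity[OF jm])
  have cS: "cc t s (?m - Suc j) \<in> S" using cc_in_S s t by simp
  have cc2: "cc t s (?m - Suc j) \<otimes> cc t s (?m - Suc j) = \<one>" using S_inv[OF cS] .
  have ccc: "cc t s (?m - Suc j) \<in> carrier W" using S_c[OF cS] .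
  have e1: "alt_prod W s t (?m + Suc j) = alt_prod W s t (?m + j) \<otimes> cc s t (?m + j)"
    using alt_Suc_right[of s t "?m + j"] sc by (simp add: cc_def)
  have e2: "alt_prod W t s (?m - j) = alt_prod W t s (?m - Suc j) \<otimes> cc t s (?m - Suc j)"
  proof -
    have "?m - j = Suc (?m - Suc j)" using jm by simp
    then show ?thesis using alt_Suc_right[of t s "?m - Suc j"] sc by (simp add: cc_def)
  qed
  have "alt_prod W s t (?m + Suc j) = alt_prod W t s (?m - Suc j) \<otimes> cc t s (?m - Suc j) \<otimes> cc t s (?m - Suc j)"
    using e1 e2 c Suc jm by simp
  also have "\<dots> = alt_prod W t s (?m - Suc j)"
    using cc2 ccc sc by (simp add: m_assoc alt_closed)
  finally show ?case .
qed

lemma E_reflect: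
  assumes go: "good_or Or" and x: "x \<in> carrier W"
    and s: "s \<in> S" and t: "t \<in> S" and m: "cox_m W s t \<noteq> 0" and j: "j < cox_m W s t"
  shows "Or (x \<otimes> alt_prod W s t (cox_m W s t + j)) (cc s t (cox_m W s t + j))
       = - Or (x \<otimes> alt_prod W t s (cox_m W s t - Suc j)) (cc t s (cox_m W s t - Suc j))"
proof -
  let ?m = "cox_m W s t"
  have sc: "s \<in> carrier W" "t \<in> carrier W" using S_c s t by auto
  have cS: "cc t s (?m - Suc j) \<in> S" using cc_in_S s t by simp
  have "alt_prod W s t (?m + j) = alt_prod W t s (?m - j)" using alt_reflect[OF s t m] j by simp
  also have "\<dots> = alt_prod W t s (?m - Suc j) \<otimes> cc t s (?m - Suc j)"
  proof -
    have "?m - j = Suc (?m - Suc j)" using j by simp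
    then show ?thesis using alt_Suc_right[of t s "?m - Suc j"] sc by (simp add: cc_def)
  qed
  finally have e: "x \<otimes> alt_prod W s t (?m + j) = (x \<otimes> alt_prod W t s (?m - Suc j)) \<otimes> cc t s (?m - Suc j)"
    using x sc S_c[OF cS] by (simp add: m_assoc alt_closed)
  show ?thesis unfolding e cc_parity[OF j]
    by (rule good_P1[OF go _ cS]) (use x sc alt_closed in simp)
qed

abbreviation "PGi ws \<equiv> word_prod G (map (\<lambda>s. inv\<^bsub>G\<^esub> (n s)) ws)"

lemma map_ni_lists: "ws \<in> lists S \<Longrightarrow> map (\<lambda>s. inv\<^bsub>G\<^esub> (n s)) ws \<in> lists (carrier G)"
  by (induct ws) (auto simp: n_carr)

lemma PGi_closed: "ws \<in> lists S \<Longrightarrow> PGi ws \<in> carrier G"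
  by (rule G.word_prod_closed[OF map_ni_lists])

lemma prj_PGi: "ws \<in> lists S \<Longrightarrow> prj (PGi ws) = word_prod W ws"
proof (induct ws)
  case Nil then show ?case by (simp add: word_prod_def)
next
  case (Cons a ws)
  then show ?case using PGi_closed[of ws]
    by (simp add: G.word_prod_Cons word_prod_Cons n_carr prj_n S_invS)
qed

lemma PGi_rev: "ws \<in> lists S \<Longrightarrow> PGi (rev ws) = inv\<^bsub>G\<^esub> (PG ws)"
proof (induct ws)
  case Nil then show ?case by simp
next
  case (Cons a ws)
  have a: "a \<in> S" and ws: "ws \<in> lists S" using Cons by auto
  have rws: "rev ws \<in> lists S" using ws by (simp add: in_lists_conv_set)
  have a1: "[a] \<in> lists S" using a by simp
  have "PGi (rev (a # ws)) = PGi (rev ws) \<otimes>\<^bsub>G\<^esub> PGi [a]"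
    using G.word_prod_append[OF map_ni_lists[OF rws] map_ni_lists[OF a1]] by simp
  also have "\<dots> = inv\<^bsub>G\<^esub> (PG ws) \<otimes>\<^bsub>G\<^esub> inv\<^bsub>G\<^esub> (n a)"
    using Cons.hyps[OF ws] n_carr[OF a] by (simp add: G.word_prod_Cons)
  also have "\<dots> = inv\<^bsub>G\<^esub> (PG (a # ws))"
    using n_carr[OF a] PG_closed[OF ws] by (simp add: G.word_prod_Cons G.inv_mult_group)
  finally show ?case .
qed

lemma cc_lists: "s \<in> S \<Longrightarrow> t \<in> S \<Longrightarrow> map (cc s t) xs \<in> lists S"
  using cc_in_S by auto

lemma len_altcc:
  assumes s: "s \<in> S" and t: "t \<in> S" and m: "cox_m W s t \<noteq> 0" and j: "j \<le> cox_m W s t"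
  shows "ext_length W S Omega (alt_prod W (cc s t a) (cc s t (Suc a)) j) = j"
proof (cases "even a")
  case True then show ?thesis using ext_length_alt[OF s t m j] by (simp add: cc_def)
next
  case False then show ?thesis using ext_length_alt[OF t s _ ] m j cox_m_sym[OF s t] by (simp add: cc_def)
qed

lemma len_PG_cc:
  assumes s: "s \<in> S" and t: "t \<in> S" and m: "cox_m W s t \<noteq> 0" and j: "j \<le> cox_m W s t"
  shows "len (PG (map (cc s t) [a..<a+j])) = j"
proof -
  have "len (PG (map (cc s t) [a..<a+j])) = ext_length W S Omega (word_prod W (map (cc s t) [a..<a+j]))"
    using prj_PG[OF cc_lists[OF s t]] by (simp add: len_def')
  also have "\<dots> = j" unfolding map_cc_upt word_prod_altl by (rule len_altcc[OF s t m j])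
  finally show ?thesis .
qed

lemma len_PGi_cc:
  assumes s: "s \<in> S" and t: "t \<in> S" and m: "cox_m W s t \<noteq> 0" and j: "j \<le> cox_m W s t"
  shows "len (PGi (map (cc s t) (rev [a..<a+j]))) = j"
proof -
  have 1: "len (PGi (map (cc s t) (rev [a..<a+j]))) = ext_length W S Omega (word_prod W (map (cc s t) (rev [a..<a+j])))"
    using prj_PGi[OF cc_lists[OF s t]] by (simp add: len_def')
  have 2: "map (cc s t) (rev [a..<a+j]) = altl (cc s t (a+j+1)) (cc s t (Suc (a+j+1))) j"
    unfolding map_cc_rev by simp
  have 3: "ext_length W S Omega (word_prod W (altl (cc s t (a+j+1)) (cc s t (Suc (a+j+1))) j)) = j"
    unfolding word_prod_altl by (rule len_altcc[OF s t m j])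
  show ?thesis using 1 2 3 by simp
qed

lemma TP_pos:
  assumes s: "s \<in> S" and t: "t \<in> S" and m: "cox_m W s t \<noteq> 0"
  shows "j \<le> cox_m W s t \<Longrightarrow>
    word_prod AA (map (\<lambda>i. TT (n (cc s t i))) [a..<a+j]) = TT (PG (map (cc s t) [a..<a+j]))"
proof (induct j)
  case 0 then show ?case by (simp add: TT_one)
next
  case (Suc j)
  let ?X = "PG (map (cc s t) [a..<a+j])"
  let ?N = "n (cc s t (a+j))"
  have cS: "cc s t (a+j) \<in> S" using cc_in_S s t by simp
  have Xc: "?X \<in> carrier G" using PG_closed[OF cc_lists[OF s t]] .
  have Nc: "?N \<in> carrier G" using n_carr[OF cS] .
  have l: "map (\<lambda>i. TT (n (cc s t i))) [a..<a+j] \<in> lists (carrier AA)"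
    using TT_carr n_carr cc_in_S s t by auto
  have "word_prod AA (map (\<lambda>i. TT (n (cc s t i))) [a..<a + Suc j])
      = word_prod AA (map (\<lambda>i. TT (n (cc s t i))) [a..<a+j]) \<otimes>\<^bsub>AA\<^esub> word_prod AA [TT ?N]"
    using A.word_prod_append[OF l, of "[TT ?N]"] TT_carr[OF Nc] by simp
  also have "\<dots> = TT ?X \<otimes>\<^bsub>AA\<^esub> TT ?N" using Suc TT_carr[OF Nc] by (simp add: A.word_prod_Cons)
  also have "\<dots> = TT (?X \<otimes>\<^bsub>G\<^esub> ?N)"
  proof (rule TT_mult[OF Xc Nc])
    have "PG (map (cc s t) [a..<a + Suc j]) = ?X \<otimes>\<^bsub>G\<^esub> ?N"
      using PG_append[OF cc_lists[OF s t] cc_lists[OF s t], of "[a..<a+j]" "[a+j]"] Nc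
      by (simp add: G.word_prod_Cons)
    moreover have "len (PG (map (cc s t) [a..<a + Suc j])) = Suc j"
      by (rule len_PG_cc[OF s t m Suc.prems])
    moreover have "len ?X = j" using len_PG_cc[OF s t m] Suc.prems by simp
    moreover have "len ?N = 1" using len_SOm[OF Nc cS one_Om] prj_n[OF cS] S_c[OF cS] by simp
    ultimately show "len (?X \<otimes>\<^bsub>G\<^esub> ?N) = len ?X + len ?N" by simp
  qed
  also have "?X \<otimes>\<^bsub>G\<^esub> ?N = PG (map (cc s t) [a..<a + Suc j])"
    using PG_append[OF cc_lists[OF s t] cc_lists[OF s t], of "[a..<a+j]" "[a+j]"] Nc
    by (simp add: G.word_prod_Cons)
  finally show ?case .
qed

lemma TP_neg:
  assumes s: "s \<in> S" and t: "t \<in> S" and m: "cox_m W s t \<noteq> 0"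
  shows "j \<le> cox_m W s t \<Longrightarrow>
    word_prod AA (map (\<lambda>i. inv\<^bsub>AA\<^esub> (TT (inv\<^bsub>G\<^esub> (n (cc s t i))))) [a..<a+j])
      = inv\<^bsub>AA\<^esub> (TT (PGi (map (cc s t) (rev [a..<a+j]))))"
proof (induct j)
  case 0 then show ?case by (simp add: TT_one)
next
  case (Suc j)
  let ?Y = "PGi (map (cc s t) (rev [a..<a+j]))"
  let ?N = "inv\<^bsub>G\<^esub> (n (cc s t (a+j)))"
  have cS: "cc s t (a+j) \<in> S" using cc_in_S s t by simp
  have Yc: "?Y \<in> carrier G" using PGi_closed[OF cc_lists[OF s t]] .
  have Nc: "?N \<in> carrier G" using n_carr[OF cS] by simp
  have l: "map (\<lambda>i. inv\<^bsub>AA\<^esub> (TT (inv\<^bsub>G\<^esub> (n (cc s t i))))) [a..<a+j] \<in> lists (carrier AA)"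
    using TT_carr n_carr cc_in_S s t by auto
  have e: "PGi (map (cc s t) (rev [a..<a + Suc j])) = ?N \<otimes>\<^bsub>G\<^esub> ?Y"
    by (simp add: G.word_prod_Cons)
  have "word_prod AA (map (\<lambda>i. inv\<^bsub>AA\<^esub> (TT (inv\<^bsub>G\<^esub> (n (cc s t i))))) [a..<a + Suc j])
      = word_prod AA (map (\<lambda>i. inv\<^bsub>AA\<^esub> (TT (inv\<^bsub>G\<^esub> (n (cc s t i))))) [a..<a+j]) \<otimes>\<^bsub>AA\<^esub> word_prod AA [inv\<^bsub>AA\<^esub> (TT ?N)]"
    using A.word_prod_append[OF l, of "[inv\<^bsub>AA\<^esub> (TT ?N)]"] TT_carr[OF Nc] by simp
  also have "\<dots> = inv\<^bsub>AA\<^esub> (TT ?Y) \<otimes>\<^bsub>AA\<^esub> inv\<^bsub>AA\<^esub> (TT ?N)" using Suc TT_carr[OF Nc] by (simp add: A.word_prod_Cons)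
  also have "\<dots> = inv\<^bsub>AA\<^esub> (TT ?N \<otimes>\<^bsub>AA\<^esub> TT ?Y)" using TT_carr[OF Nc] TT_carr[OF Yc] by (simp add: A.inv_mult_group)
  also have "TT ?N \<otimes>\<^bsub>AA\<^esub> TT ?Y = TT (?N \<otimes>\<^bsub>G\<^esub> ?Y)"
  proof (rule TT_mult[OF Nc Yc])
    have "len (PGi (map (cc s t) (rev [a..<a + Suc j]))) = Suc j"
      by (rule len_PGi_cc[OF s t m Suc.prems])
    moreover have "len ?Y = j" using len_PGi_cc[OF s t m] Suc.prems by simp
    moreover have "prj ?N = cc s t (a+j)" using n_carr[OF cS] prj_n[OF cS] S_invS[OF cS] by simp
    then have "len ?N = 1" using len_SOm[OF Nc cS one_Om] S_c[OF cS] by simp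
    ultimately show "len (?N \<otimes>\<^bsub>G\<^esub> ?Y) = len ?N + len ?Y" using e by simp
  qed
  finally show ?case using e by simp
qed

lemma take_lists: "ws \<in> lists A \<Longrightarrow> take i ws \<in> lists A"
  by (induct ws arbitrary: i) (auto simp: take_Cons split: nat.split)

lemma th_idx:
  "ws \<in> lists S \<Longrightarrow> g \<in> carrier G \<Longrightarrow>
   th ori g ws = word_prod AA (map (\<lambda>i. Ls (ori (g \<otimes>\<^bsub>G\<^esub> PG (take i ws)) (ws ! i)) (ws ! i)) [0..<length ws])"
proof (induct ws arbitrary: g)
  case Nil then show ?case by simp
next
  case (Cons a ws)
  have a: "a \<in> S" and ws: "ws \<in> lists S" using Cons.prems by auto
  have ga: "g \<otimes>\<^bsub>G\<^esub> n a \<in> carrier G" using Cons.prems n_carr[OF a] by simp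
  have "map (\<lambda>i. Ls (ori (g \<otimes>\<^bsub>G\<^esub> PG (take i (a # ws))) ((a # ws) ! i)) ((a # ws) ! i)) [0..<length (a # ws)]
     = Ls (ori g a) a # map (\<lambda>i. Ls (ori ((g \<otimes>\<^bsub>G\<^esub> n a) \<otimes>\<^bsub>G\<^esub> PG (take i ws)) (ws ! i)) (ws ! i)) [0..<length ws]"
  proof -
    have "\<And>i. g \<otimes>\<^bsub>G\<^esub> PG (take (Suc i) (a # ws)) = (g \<otimes>\<^bsub>G\<^esub> n a) \<otimes>\<^bsub>G\<^esub> PG (take i ws)"
      using Cons.prems n_carr[OF a] PG_closed[OF take_lists[OF ws]] by (simp add: G.word_prod_Cons G.m_assoc)
    then show ?thesis using Cons.prems by (simp add: map_upt_Suc del: upt_Suc)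
  qed
  then show ?case using Cons.hyps[OF ws ga] Ls_carr[OF a] by (simp add: A.word_prod_Cons)
qed

end


context procox
begin

lemma relA:
  assumes c: "Xx \<in> carrier G" "Mm \<in> carrier G" "Zz \<in> carrier G"
    and tau: "tau = Xx \<otimes>\<^bsub>G\<^esub> (Mm \<otimes>\<^bsub>G\<^esub> Zz)" "prj tau = \<one>"
    and l: "len Xx = k" "len (inv\<^bsub>G\<^esub> Mm) = M" "len Zz = M - k" "k \<le> M"
  shows "TT Xx \<otimes>\<^bsub>AA\<^esub> (inv\<^bsub>AA\<^esub> (TT (inv\<^bsub>G\<^esub> Mm)) \<otimes>\<^bsub>AA\<^esub> TT Zz) = TT tau"
proof -
  have tc: "tau \<in> carrier G" using tau c by simp
  let ?Q = "inv\<^bsub>G\<^esub> tau \<otimes>\<^bsub>G\<^esub> Xx"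
  have Qc: "?Q \<in> carrier G" using tc c by simp
  have lt: "len tau = 0" using len_Om[OF tc] tau one_Om by simp
  have lQ: "len ?Q = k" using len_Om_mult[OF c(1), of "inv\<^bsub>G\<^esub> tau"] tc tau l by simp
  have e1: "inv\<^bsub>G\<^esub> Mm = Zz \<otimes>\<^bsub>G\<^esub> ?Q"
    using c tau(1) by (simp add: G.inv_mult_group G.m_assoc G.cancel_helpers)
  have T1: "TT (inv\<^bsub>G\<^esub> Mm) = TT Zz \<otimes>\<^bsub>AA\<^esub> TT ?Q"
    using TT_mult[OF c(3) Qc] e1 l lQ by simp
  have e2: "Xx = tau \<otimes>\<^bsub>G\<^esub> ?Q" using tc c by (simp add: G.cancel_helpers)
  have T2: "TT Xx = TT tau \<otimes>\<^bsub>AA\<^esub> TT ?Q"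
    using TT_mult[OF tc Qc] e2 l lQ lt by simp
  have cc: "TT tau \<in> carrier AA" "TT ?Q \<in> carrier AA" "TT Zz \<in> carrier AA"
    using TT_carr tc Qc c by auto
  show ?thesis unfolding T1 T2 using cc
    by (simp add: A.inv_mult_group A.m_assoc A.cancel_helpers)
qed

lemma relB:
  assumes c: "Xx \<in> carrier G" "Mm \<in> carrier G" "Zz \<in> carrier G"
    and tau: "tau = Xx \<otimes>\<^bsub>G\<^esub> (Mm \<otimes>\<^bsub>G\<^esub> Zz)" "prj tau = \<one>"
    and l: "len (inv\<^bsub>G\<^esub> Xx) = k" "len Mm = M" "len (inv\<^bsub>G\<^esub> Zz) = M - k" "k \<le> M"
  shows "inv\<^bsub>AA\<^esub> (TT (inv\<^bsub>G\<^esub> Xx)) \<otimes>\<^bsub>AA\<^esub> (TT Mm \<otimes>\<^bsub>AA\<^esub> inv\<^bsub>AA\<^esub> (TT (inv\<^bsub>G\<^esub> Zz))) = TT tau"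
proof -
  have tc: "tau \<in> carrier G" using tau c by simp
  have ic: "inv\<^bsub>G\<^esub> Xx \<in> carrier G" "inv\<^bsub>G\<^esub> Zz \<in> carrier G" using c by auto
  have lt: "len tau = 0" using len_Om[OF tc] tau one_Om by simp
  have l1: "len (inv\<^bsub>G\<^esub> Xx \<otimes>\<^bsub>G\<^esub> tau) = k" using len_mult_Om[OF ic(1) tc] tau one_Om l by simp
  have T1: "TT (inv\<^bsub>G\<^esub> Xx) \<otimes>\<^bsub>AA\<^esub> TT tau = TT (inv\<^bsub>G\<^esub> Xx \<otimes>\<^bsub>G\<^esub> tau)"
    using TT_mult[OF ic(1) tc] l1 l lt by simp
  have e: "Mm = (inv\<^bsub>G\<^esub> Xx \<otimes>\<^bsub>G\<^esub> tau) \<otimes>\<^bsub>G\<^esub> inv\<^bsub>G\<^esub> Zz"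
    using c tau(1) by (simp add: G.m_assoc G.cancel_helpers)
  have T2: "TT (inv\<^bsub>G\<^esub> Xx \<otimes>\<^bsub>G\<^esub> tau) \<otimes>\<^bsub>AA\<^esub> TT (inv\<^bsub>G\<^esub> Zz) = TT Mm"
    using TT_mult[of "inv\<^bsub>G\<^esub> Xx \<otimes>\<^bsub>G\<^esub> tau" "inv\<^bsub>G\<^esub> Zz"] ic tc e l l1 by simp
  have cc: "TT tau \<in> carrier AA" "TT (inv\<^bsub>G\<^esub> Xx) \<in> carrier AA" "TT (inv\<^bsub>G\<^esub> Zz) \<in> carrier AA"
    using TT_carr tc ic by auto
  show ?thesis unfolding T2[symmetric] T1[symmetric] using cc
    by (simp add: A.m_assoc A.cancel_helpers)
qed

lemma map_F_pos:
  assumes "\<forall>i\<in>set xs. e i = 1"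
  shows "map (\<lambda>i. Ls (e i) (cc s t i)) xs = map (\<lambda>i. TT (n (cc s t i))) xs"
  using assms by (simp add: Lsign_def)

lemma map_F_neg:
  assumes "\<forall>i\<in>set xs. e i = -1"
  shows "map (\<lambda>i. Ls (e i) (cc s t i)) xs = map (\<lambda>i. inv\<^bsub>AA\<^esub> (TT (inv\<^bsub>G\<^esub> (n (cc s t i))))) xs"
  using assms by (simp add: Lsign_def)

lemma th_relator:
  assumes rep: "rep ori Or" and go: "good_or Or" and g: "g \<in> carrier G"
    and s: "s \<in> S" and t: "t \<in> S" and m: "cox_m W s t \<noteq> 0"
  shows "th ori g (altl s t (2 * cox_m W s t)) = TT (PG (altl s t (2 * cox_m W s t)))"
proof -
  define M where "M = cox_m W s t"
  define x where "x = prj g"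
  define E where "E i = Or (x \<otimes> alt_prod W s t i) (cc s t i)" for i
  define F where "F i = Ls (E i) (cc s t i)" for i
  have mM: "M \<noteq> 0" using m M_def by simp
  have xc: "x \<in> carrier W" unfolding x_def using g by simp
  have sc: "s \<in> carrier W" "t \<in> carrier W" using S_c s t by auto
  let ?r = "altl s t (2 * M)"
  have rS: "?r \<in> lists S" by (rule altl_lists[OF s t])
  have step1: "th ori g ?r = word_prod AA (map F [0..<2 * M])"
  proof -
    have mc: "map (\<lambda>i. Ls (ori (g \<otimes>\<^bsub>G\<^esub> PG (take i ?r)) (?r ! i)) (?r ! i)) [0..<length ?r] = map F [0..<2 * M]"
    proof (rule map_cong)
      show "[0..<length ?r] = [0..<2 * M]" by simp
    next
      fix i assume "i \<in> set [0..<2 * M]"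
      then have i: "i < 2 * M" by simp
      have tk: "take i ?r = altl s t i" using i by (simp add: take_altl)
      have nth: "?r ! i = cc s t i" using i by (simp add: nth_altl_cc)
      have aS: "altl s t i \<in> lists S" by (rule altl_lists[OF s t])
      have cS: "cc s t i \<in> S" using cc_in_S s t by simp
      have pc: "g \<otimes>\<^bsub>G\<^esub> PG (altl s t i) \<in> carrier G" using g PG_closed[OF aS] by simp
      have "prj (g \<otimes>\<^bsub>G\<^esub> PG (altl s t i)) = x \<otimes> alt_prod W s t i"
        unfolding x_def using g PG_closed[OF aS] prj_PG[OF aS] by (simp add: word_prod_altl)
      then have "ori (g \<otimes>\<^bsub>G\<^esub> PG (altl s t i)) (cc s t i) = E i"
        unfolding E_def using rep pc cS by simp
      then show "Ls (ori (g \<otimes>\<^bsub>G\<^esub> PG (take i ?r)) (?r ! i)) (?r ! i) = F i"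
        unfolding tk nth F_def by simp
    qed
    show ?thesis using th_idx[OF rS g, of ori] mc by (simp only:)
  qed
  have "or2 W Or x s t" using good_P3[OF go xc s t m] .
  then have "\<exists>k\<le>M. ((\<forall>i<M. E i = sign (i < k)) \<and> (\<forall>i<M. Or (x \<otimes> alt_prod W t s i) (cc t s i) = - sign (i < M - k))) \<or>
             ((\<forall>i<M. E i = - sign (i < k)) \<and> (\<forall>i<M. Or (x \<otimes> alt_prod W t s i) (cc t s i) = sign (i < M - k)))"
    unfolding or2_def Let_def E_def cc_def M_def by simp
  then obtain k where k: "k \<le> M" and cs:
    "((\<forall>i<M. E i = sign (i < k)) \<and> (\<forall>i<M. Or (x \<otimes> alt_prod W t s i) (cc t s i) = - sign (i < M - k))) \<or>
     ((\<forall>i<M. E i = - sign (i < k)) \<and> (\<forall>i<M. Or (x \<otimes> alt_prod W t s i) (cc t s i) = sign (i < M - k)))"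
    by blast
  have refl: "E (M + j) = - Or (x \<otimes> alt_prod W t s (M - Suc j)) (cc t s (M - Suc j))" if "j < M" for j
    unfolding E_def M_def using E_reflect[OF go xc s t m] that M_def by simp
  have kk: "(M - Suc j < M - k) = (k \<le> j)" if "j < M" for j using that k by arith
  have e1: "[0..<2 * M] = [0..<k] @ [k..<k + M] @ [k + M..<(k + M) + (M - k)]"
  proof -
    have a: "2 * M = k + (M + (M - k))" using k by simp
    have "[0..<k + (M + (M - k))] = [0..<k] @ [k..<k + (M + (M - k))]" by (rule upt_add_eq_append) simp
    moreover have "[k..<k + M + (M - k)] = [k..<k + M] @ [k + M..<(k + M) + (M - k)]" by (rule upt_add_eq_append) simp
    ultimately show ?thesis unfolding a by (simp add: add.assoc)
  qed
  have Fl: "map F xs \<in> lists (carrier AA)" for xs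
    unfolding F_def using Ls_carr cc_in_S s t by auto
  have P: "word_prod AA (map F [0..<2 * M]) = word_prod AA (map F [0..<k]) \<otimes>\<^bsub>AA\<^esub>
      (word_prod AA (map F [k..<k + M]) \<otimes>\<^bsub>AA\<^esub> word_prod AA (map F [k + M..<(k + M) + (M - k)]))"
    unfolding e1 map_append by (simp add: A.word_prod_append Fl)
  define Xx where "Xx = PG (map (cc s t) [0..<k])"
  define Mm where "Mm = PG (map (cc s t) [k..<k + M])"
  define Zz where "Zz = PG (map (cc s t) [k + M..<(k + M) + (M - k)])"
  have cl: "map (cc s t) xs \<in> lists S" for xs by (rule cc_lists[OF s t])
  have Xc: "Xx \<in> carrier G" and Mc: "Mm \<in> carrier G" and Zc: "Zz \<in> carrier G"
    unfolding Xx_def Mm_def Zz_def using PG_closed[OF cl] by auto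
  have tau: "PG ?r = Xx \<otimes>\<^bsub>G\<^esub> (Mm \<otimes>\<^bsub>G\<^esub> Zz)"
  proof -
    let ?A = "map (cc s t) [0..<k]"
    let ?B = "map (cc s t) [k..<k + M]"
    let ?C = "map (cc s t) [k + M..<(k + M) + (M - k)]"
    have "PG ?r = PG (?A @ ?B @ ?C)" by (simp only: altl_cc e1 map_append)
    also have "\<dots> = PG ?A \<otimes>\<^bsub>G\<^esub> PG (?B @ ?C)"
      by (rule PG_append[OF cl]) (simp only: append_in_lists_conv cl simp_thms)
    also have "PG (?B @ ?C) = PG ?B \<otimes>\<^bsub>G\<^esub> PG ?C" by (rule PG_append[OF cl cl])
    finally show ?thesis by (simp only: Xx_def Mm_def Zz_def)
  qed
  have ptau: "prj (PG ?r) = \<one>"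
  proof -
    have "prj (PG ?r) = alt_prod W s t (2 * M + 0)" using prj_PG[OF rS] by (simp add: word_prod_altl)
    also have "\<dots> = (s \<otimes> t) [^] M \<otimes> alt_prod W s t 0" by (rule alt_add_even[OF sc])
    also have "\<dots> = \<one>" unfolding M_def cox_m_def using sc by simp
    finally show ?thesis .
  qed
  have kM: "k \<le> cox_m W s t" "M \<le> cox_m W s t" "M - k \<le> cox_m W s t" using k M_def by auto
  have lX: "len Xx = k" unfolding Xx_def using len_PG_cc[OF s t m kM(1), of 0] by simp
  have lM: "len Mm = M" unfolding Mm_def by (rule len_PG_cc[OF s t m kM(2)])
  have lZ: "len Zz = M - k" unfolding Zz_def by (rule len_PG_cc[OF s t m kM(3)])
  have iX: "PGi (map (cc s t) (rev [0..<0 + k])) = inv\<^bsub>G\<^esub> Xx"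
    unfolding Xx_def using PGi_rev[OF cl] by (simp add: rev_map)
  have iM: "PGi (map (cc s t) (rev [k..<k + M])) = inv\<^bsub>G\<^esub> Mm"
    unfolding Mm_def using PGi_rev[OF cl] by (simp add: rev_map)
  have iZ: "PGi (map (cc s t) (rev [k + M..<(k + M) + (M - k)])) = inv\<^bsub>G\<^esub> Zz"
    unfolding Zz_def using PGi_rev[OF cl] by (simp add: rev_map)
  have liX: "len (inv\<^bsub>G\<^esub> Xx) = k" using len_PGi_cc[OF s t m kM(1), of 0] iX by simp
  have liM: "len (inv\<^bsub>G\<^esub> Mm) = M" using len_PGi_cc[OF s t m kM(2), of k] iM by simp
  have liZ: "len (inv\<^bsub>G\<^esub> Zz) = M - k" using len_PGi_cc[OF s t m kM(3), of "k + M"] iZ by simp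
  have pos: "word_prod AA (map (\<lambda>i. TT (n (cc s t i))) [a..<a + j]) = TT (PG (map (cc s t) [a..<a + j]))"
    if "j \<le> M" for a j using TP_pos[OF s t m] that M_def by simp
  have neg: "word_prod AA (map (\<lambda>i. inv\<^bsub>AA\<^esub> (TT (inv\<^bsub>G\<^esub> (n (cc s t i))))) [a..<a + j])
      = inv\<^bsub>AA\<^esub> (TT (PGi (map (cc s t) (rev [a..<a + j]))))"
    if "j \<le> M" for a j using TP_neg[OF s t m] that M_def by simp
  from cs show ?thesis
  proof
    assume A: "(\<forall>i<M. E i = sign (i < k)) \<and> (\<forall>i<M. Or (x \<otimes> alt_prod W t s i) (cc t s i) = - sign (i < M - k))"
    have s1: "\<forall>i\<in>set [0..<k]. E i = 1" using A k by (auto simp: sign_def)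
    have s2: "\<forall>i\<in>set [k..<k + M]. E i = -1"
    proof
      fix i assume "i \<in> set [k..<k + M]"
      then have i: "k \<le> i" "i < k + M" by auto
      show "E i = -1"
      proof (cases "i < M")
        case True then show ?thesis using A i by (simp add: sign_def)
      next
        case False
        define j where "j = i - M"
        have j: "i = M + j" "j < k" using i False unfolding j_def by auto
        have jM: "j < M" using j k by simp
        show ?thesis using refl[OF jM] A jM kk[OF jM] j by (simp add: sign_def)
      qed
    qed
    have s3: "\<forall>i\<in>set [k + M..<(k + M) + (M - k)]. E i = 1"
    proof
      fix i assume "i \<in> set [k + M..<(k + M) + (M - k)]"
      then have i: "k + M \<le> i" "i < 2 * M" using k by auto
      define j where "j = i - M"
      have j: "i = M + j" "k \<le> j" using i k unfolding j_def by auto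
      have jM: "j < M" using j i by simp
      show "E i = 1" using refl[OF jM] A jM kk[OF jM] j by (simp add: sign_def)
    qed
    have p1: "word_prod AA (map F [0..<k]) = TT Xx"
    proof -
      have "map F [0..<k] = map (\<lambda>i. TT (n (cc s t i))) [0..<k]" unfolding F_def by (rule map_F_pos[OF s1])
      moreover have "word_prod AA (map (\<lambda>i. TT (n (cc s t i))) [0..<k]) = TT Xx"
        using pos[of k 0, OF k] unfolding add_0_left Xx_def .
      ultimately show ?thesis by (simp only:)
    qed
    have p2: "word_prod AA (map F [k..<k + M]) = inv\<^bsub>AA\<^esub> (TT (inv\<^bsub>G\<^esub> Mm))"
    proof -
      have "map F [k..<k + M] = map (\<lambda>i. inv\<^bsub>AA\<^esub> (TT (inv\<^bsub>G\<^esub> (n (cc s t i))))) [k..<k + M]"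
        unfolding F_def by (rule map_F_neg[OF s2])
      moreover have "word_prod AA (map (\<lambda>i. inv\<^bsub>AA\<^esub> (TT (inv\<^bsub>G\<^esub> (n (cc s t i))))) [k..<k + M]) = inv\<^bsub>AA\<^esub> (TT (inv\<^bsub>G\<^esub> Mm))"
        using neg[of M k, OF le_refl] unfolding iM .
      ultimately show ?thesis by (simp only:)
    qed
    have p3: "word_prod AA (map F [k + M..<(k + M) + (M - k)]) = TT Zz"
    proof -
      have "map F [k + M..<(k + M) + (M - k)] = map (\<lambda>i. TT (n (cc s t i))) [k + M..<(k + M) + (M - k)]"
        unfolding F_def by (rule map_F_pos[OF s3])
      moreover have "word_prod AA (map (\<lambda>i. TT (n (cc s t i))) [k + M..<(k + M) + (M - k)]) = TT Zz"
        using pos[of "M - k" "k + M"] unfolding Zz_def by simp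
      ultimately show ?thesis by (simp only:)
    qed
    have "th ori g ?r = TT Xx \<otimes>\<^bsub>AA\<^esub> (inv\<^bsub>AA\<^esub> (TT (inv\<^bsub>G\<^esub> Mm)) \<otimes>\<^bsub>AA\<^esub> TT Zz)"
      unfolding step1 P p1 p2 p3 ..
    also have "\<dots> = TT (PG ?r)" by (rule relA[OF Xc Mc Zc tau ptau lX liM lZ k])
    finally show ?thesis unfolding M_def .
  next
    assume B: "(\<forall>i<M. E i = - sign (i < k)) \<and> (\<forall>i<M. Or (x \<otimes> alt_prod W t s i) (cc t s i) = sign (i < M - k))"
    have s1: "\<forall>i\<in>set [0..<k]. E i = -1" using B k by (auto simp: sign_def)
    have s2: "\<forall>i\<in>set [k..<k + M]. E i = 1"
    proof
      fix i assume "i \<in> set [k..<k + M]"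
      then have i: "k \<le> i" "i < k + M" by auto
      show "E i = 1"
      proof (cases "i < M")
        case True then show ?thesis using B i by (simp add: sign_def)
      next
        case False
        define j where "j = i - M"
        have j: "i = M + j" "j < k" using i False unfolding j_def by auto
        have jM: "j < M" using j k by simp
        show ?thesis using refl[OF jM] B jM kk[OF jM] j by (simp add: sign_def)
      qed
    qed
    have s3: "\<forall>i\<in>set [k + M..<(k + M) + (M - k)]. E i = -1"
    proof
      fix i assume "i \<in> set [k + M..<(k + M) + (M - k)]"
      then have i: "k + M \<le> i" "i < 2 * M" using k by auto
      define j where "j = i - M"
      have j: "i = M + j" "k \<le> j" using i k unfolding j_def by auto
      have jM: "j < M" using j i by simp
      show "E i = -1" using refl[OF jM] B jM kk[OF jM] j by (simp add: sign_def)
    qed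
    have p1: "word_prod AA (map F [0..<k]) = inv\<^bsub>AA\<^esub> (TT (inv\<^bsub>G\<^esub> Xx))"
    proof -
      have "map F [0..<k] = map (\<lambda>i. inv\<^bsub>AA\<^esub> (TT (inv\<^bsub>G\<^esub> (n (cc s t i))))) [0..<k]"
        unfolding F_def by (rule map_F_neg[OF s1])
      moreover have "word_prod AA (map (\<lambda>i. inv\<^bsub>AA\<^esub> (TT (inv\<^bsub>G\<^esub> (n (cc s t i))))) [0..<k]) = inv\<^bsub>AA\<^esub> (TT (inv\<^bsub>G\<^esub> Xx))"
        using neg[of k 0, OF k] iX unfolding add_0_left by simp
      ultimately show ?thesis by (simp only:)
    qed
    have p2: "word_prod AA (map F [k..<k + M]) = TT Mm"
    proof -
      have "map F [k..<k + M] = map (\<lambda>i. TT (n (cc s t i))) [k..<k + M]"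
        unfolding F_def by (rule map_F_pos[OF s2])
      moreover have "word_prod AA (map (\<lambda>i. TT (n (cc s t i))) [k..<k + M]) = TT Mm"
        using pos[of M k, OF le_refl] unfolding Mm_def .
      ultimately show ?thesis by (simp only:)
    qed
    have p3: "word_prod AA (map F [k + M..<(k + M) + (M - k)]) = inv\<^bsub>AA\<^esub> (TT (inv\<^bsub>G\<^esub> Zz))"
    proof -
      have "map F [k + M..<(k + M) + (M - k)] = map (\<lambda>i. inv\<^bsub>AA\<^esub> (TT (inv\<^bsub>G\<^esub> (n (cc s t i))))) [k + M..<(k + M) + (M - k)]"
        unfolding F_def by (rule map_F_neg[OF s3])
      moreover have "word_prod AA (map (\<lambda>i. inv\<^bsub>AA\<^esub> (TT (inv\<^bsub>G\<^esub> (n (cc s t i))))) [k + M..<(k + M) + (M - k)]) = inv\<^bsub>AA\<^esub> (TT (inv\<^bsub>G\<^esub> Zz))"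
        using neg[of "M - k" "k + M"] unfolding iZ by simp
      ultimately show ?thesis by (simp only:)
    qed
    have "th ori g ?r = inv\<^bsub>AA\<^esub> (TT (inv\<^bsub>G\<^esub> Xx)) \<otimes>\<^bsub>AA\<^esub> (TT Mm \<otimes>\<^bsub>AA\<^esub> inv\<^bsub>AA\<^esub> (TT (inv\<^bsub>G\<^esub> Zz)))"
      unfolding step1 P p1 p2 p3 ..
    also have "\<dots> = TT (PG ?r)" by (rule relB[OF Xc Mc Zc tau ptau liX lM liZ k])
    finally show ?thesis unfolding M_def .
  qed
qed

end


context group
begin

lemma pow_conj: "x \<in> carrier G \<Longrightarrow> u \<in> carrier G \<Longrightarrow> (u \<otimes> x \<otimes> inv u) [^] (k::nat) = u \<otimes> x [^] k \<otimes> inv u"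
proof (induct k)
  case 0 then show ?case by simp
next
  case (Suc k)
  have "(u \<otimes> x \<otimes> inv u) [^] Suc k = (u \<otimes> x [^] k \<otimes> inv u) \<otimes> (u \<otimes> x \<otimes> inv u)"
    using Suc by simp
  also have "\<dots> = u \<otimes> (x [^] k \<otimes> x) \<otimes> inv u" using Suc.prems by (simp add: m_assoc cancel_helpers)
  finally show ?case by simp
qed

lemma ord_conj: "x \<in> carrier G \<Longrightarrow> u \<in> carrier G \<Longrightarrow> ord (u \<otimes> x \<otimes> inv u) = ord x"
proof -
  assume x: "x \<in> carrier G" and u: "u \<in> carrier G"
  have "(u \<otimes> x \<otimes> inv u) [^] k = \<one> \<longleftrightarrow> x [^] k = \<one>" for k :: nat
  proof -
    have "(u \<otimes> x \<otimes> inv u) [^] k = u \<otimes> x [^] k \<otimes> inv u" by (rule pow_conj[OF x u])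
    moreover have "u \<otimes> x [^] k \<otimes> inv u = \<one> \<longleftrightarrow> x [^] k = \<one>"
    proof
      assume "u \<otimes> x [^] k \<otimes> inv u = \<one>"
      then have "inv u \<otimes> (u \<otimes> x [^] k \<otimes> inv u) \<otimes> u = inv u \<otimes> u" using u by simp
      then show "x [^] k = \<one>" using u x by (simp add: m_assoc cancel_helpers)
    next
      assume "x [^] k = \<one>" then show "u \<otimes> x [^] k \<otimes> inv u = \<one>" using u by simp
    qed
    ultimately show ?thesis by simp
  qed
  then show ?thesis using ord_unique[of "u \<otimes> x \<otimes> inv u" "ord x"] pow_eq_id[OF x] x u by simp
qed

end

lemma word_prod_Cons': "word_prod G (x # ws) = x \<otimes>\<^bsub>G\<^esub> word_prod G ws"
  by (simp add: word_prod_def)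

context procox
begin

lemma cox_equiv_facts: "cox_equiv W S xs ys \<Longrightarrow> xs \<in> lists S \<and> ys \<in> lists S \<and> word_prod W xs = word_prod W ys"
proof (induct rule: cox_equiv.induct)
  case (cox_rel u v s t)
  let ?r = "concat (replicate (cox_m W s t) [s, t])"
  have sc: "s \<in> carrier W" "t \<in> carrier W" using cox_rel S_c by auto
  have rS: "?r \<in> lists S" using cox_rel by (simp add: altl_relator altl_lists)
  have "word_prod W ?r = alt_prod W s t (2 * cox_m W s t + 0)"
    by (simp only: altl_relator word_prod_altl add_0_right)
  also have "\<dots> = (s \<otimes> t) [^] cox_m W s t \<otimes> alt_prod W s t 0" by (rule alt_add_even[OF sc])
  also have "\<dots> = \<one>" unfolding cox_m_def using sc by simp
  finally have pr: "word_prod W ?r = \<one>" .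
  have uc: "u \<in> lists (carrier W)" "v \<in> lists (carrier W)" "?r \<in> lists (carrier W)"
    using cox_rel rS listsS by auto
  have "word_prod W (u @ ?r @ v) = word_prod W u \<otimes> (word_prod W ?r \<otimes> word_prod W v)"
    using uc by (simp add: word_prod_append)
  then have "word_prod W (u @ ?r @ v) = word_prod W (u @ v)"
    using pr uc word_prod_closed by (simp add: word_prod_append)
  then show ?case using cox_rel rS by simp
qed auto

lemma th_cox:
  assumes rep: "rep ori Or" and go: "good_or Or"
  shows "cox_equiv W S xs ys \<Longrightarrow> g \<in> carrier G \<Longrightarrow>
    th ori g xs = th ori g ys \<otimes>\<^bsub>AA\<^esub> TT (inv\<^bsub>G\<^esub> (PG ys) \<otimes>\<^bsub>G\<^esub> PG xs)"
proof (induct arbitrary: g rule: cox_equiv.induct)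
  case (cox_refl xs)
  then show ?case using PG_closed[OF cox_refl(1)] th_carr[OF cox_refl(1)] by (simp add: TT_one)
next
  case (cox_sym xs ys)
  have f: "xs \<in> lists S" "ys \<in> lists S" "word_prod W xs = word_prod W ys"
    using cox_equiv_facts[OF cox_sym(1)] by auto
  have pc: "PG xs \<in> carrier G" "PG ys \<in> carrier G" using PG_closed f by auto
  let ?a = "inv\<^bsub>G\<^esub> (PG ys) \<otimes>\<^bsub>G\<^esub> PG xs"
  let ?b = "inv\<^bsub>G\<^esub> (PG xs) \<otimes>\<^bsub>G\<^esub> PG ys"
  have ac: "?a \<in> carrier G" "?b \<in> carrier G" using pc by auto
  have wc: "word_prod W xs \<in> carrier W" "word_prod W ys \<in> carrier W"
    using word_prod_closed[OF listsS] f by auto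
  have pa: "prj ?a = \<one>" "prj ?b = \<one>" using pc f prj_PG wc by auto
  have la: "len ?a = 0" "len ?b = 0" using len_Om ac pa one_Om by auto
  have ab: "?a \<otimes>\<^bsub>G\<^esub> ?b = \<one>\<^bsub>G\<^esub>" using pc by (simp add: G.m_assoc G.cancel_helpers)
  have "th ori g xs \<otimes>\<^bsub>AA\<^esub> TT ?b = th ori g ys \<otimes>\<^bsub>AA\<^esub> (TT ?a \<otimes>\<^bsub>AA\<^esub> TT ?b)"
    using cox_sym(2)[OF cox_sym(3)] th_carr f TT_carr ac by (simp add: A.m_assoc)
  also have "TT ?a \<otimes>\<^bsub>AA\<^esub> TT ?b = \<one>\<^bsub>AA\<^esub>"
    using TT_mult[OF ac] la ab TT_one len_Om[of "\<one>\<^bsub>G\<^esub>"] one_Om by simp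
  finally show ?case using th_carr f by simp
next
  case (cox_trans xs ys zs)
  have f1: "xs \<in> lists S" "ys \<in> lists S" "word_prod W xs = word_prod W ys"
    using cox_equiv_facts[OF cox_trans(1)] by auto
  have f2: "zs \<in> lists S" "word_prod W ys = word_prod W zs"
    using cox_equiv_facts[OF cox_trans(3)] by auto
  have pc: "PG xs \<in> carrier G" "PG ys \<in> carrier G" "PG zs \<in> carrier G" using PG_closed f1 f2 by auto
  let ?a = "inv\<^bsub>G\<^esub> (PG ys) \<otimes>\<^bsub>G\<^esub> PG xs"
  let ?b = "inv\<^bsub>G\<^esub> (PG zs) \<otimes>\<^bsub>G\<^esub> PG ys"
  have ac: "?a \<in> carrier G" "?b \<in> carrier G" using pc by auto
  have wc: "word_prod W xs \<in> carrier W" "word_prod W ys \<in> carrier W" "word_prod W zs \<in> carrier W"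
    using word_prod_closed[OF listsS] f1 f2 by auto
  have pa: "prj ?a = \<one>" "prj ?b = \<one>" using pc f1 f2 prj_PG wc by auto
  have la: "len ?a = 0" "len ?b = 0" "len (?b \<otimes>\<^bsub>G\<^esub> ?a) = 0" using len_Om ac pa one_Om by auto
  have ba: "?b \<otimes>\<^bsub>G\<^esub> ?a = inv\<^bsub>G\<^esub> (PG zs) \<otimes>\<^bsub>G\<^esub> PG xs" using pc by (simp add: G.m_assoc G.cancel_helpers)
  have "th ori g xs = (th ori g zs \<otimes>\<^bsub>AA\<^esub> TT ?b) \<otimes>\<^bsub>AA\<^esub> TT ?a"
    using cox_trans(2)[OF cox_trans(5)] cox_trans(4)[OF cox_trans(5)] by simp
  also have "\<dots> = th ori g zs \<otimes>\<^bsub>AA\<^esub> TT (?b \<otimes>\<^bsub>G\<^esub> ?a)"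
    using TT_mult[OF ac(2) ac(1)] la th_carr f2 TT_carr ac by (simp add: A.m_assoc)
  finally show ?case unfolding ba .
next
  case (cox_rel u v s t)
  let ?r = "altl s t (2 * cox_m W s t)"
  have r: "concat (replicate (cox_m W s t) [s, t]) = ?r" by (rule altl_relator)
  have rS: "?r \<in> lists S" using cox_rel by (simp add: altl_lists)
  have uS: "u \<in> lists S" "v \<in> lists S" using cox_rel by auto
  have g: "g \<in> carrier G" by fact
  have pc: "PG u \<in> carrier G" "PG v \<in> carrier G" "PG ?r \<in> carrier G" using PG_closed uS rS by auto
  have gu: "g \<otimes>\<^bsub>G\<^esub> PG u \<in> carrier G" using g pc by simp
  have pr: "prj (PG ?r) = \<one>"
    using cox_equiv_facts[OF cox_equiv.cox_rel[OF cox_rel(1,2,3,4,5)]] prj_PG uS rS pc r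
      word_prod_append[OF listsS listsS] word_prod_closed[OF listsS]
    by (simp add: word_prod_append listsS)
  have "th ori g (u @ ?r @ v) = th ori g u \<otimes>\<^bsub>AA\<^esub> (th ori (g \<otimes>\<^bsub>G\<^esub> PG u) ?r \<otimes>\<^bsub>AA\<^esub> th ori (g \<otimes>\<^bsub>G\<^esub> PG u \<otimes>\<^bsub>G\<^esub> PG ?r) v)"
    using th_append[OF uS(1) _ g, of "?r @ v"] th_append[OF rS uS(2) gu] rS uS by simp
  also have "th ori (g \<otimes>\<^bsub>G\<^esub> PG u \<otimes>\<^bsub>G\<^esub> PG ?r) v = th ori (g \<otimes>\<^bsub>G\<^esub> PG u) v"
    by (rule th_prj[OF rep uS(2)]) (use gu pc pr in auto)
  also have "th ori (g \<otimes>\<^bsub>G\<^esub> PG u) ?r = TT (PG ?r)"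
    by (rule th_relator[OF rep go gu]) (use cox_rel in auto)
  also have "TT (PG ?r) \<otimes>\<^bsub>AA\<^esub> th ori (g \<otimes>\<^bsub>G\<^esub> PG u) v
      = th ori (g \<otimes>\<^bsub>G\<^esub> PG u) v \<otimes>\<^bsub>AA\<^esub> TT (inv\<^bsub>G\<^esub> (PG v) \<otimes>\<^bsub>G\<^esub> PG ?r \<otimes>\<^bsub>G\<^esub> PG v)"
    by (rule th_kernel[OF uS(2) pc(3) pr])
  also have "th ori g u \<otimes>\<^bsub>AA\<^esub> (th ori (g \<otimes>\<^bsub>G\<^esub> PG u) v \<otimes>\<^bsub>AA\<^esub> TT (inv\<^bsub>G\<^esub> (PG v) \<otimes>\<^bsub>G\<^esub> PG ?r \<otimes>\<^bsub>G\<^esub> PG v))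
     = th ori g (u @ v) \<otimes>\<^bsub>AA\<^esub> TT (inv\<^bsub>G\<^esub> (PG v) \<otimes>\<^bsub>G\<^esub> PG ?r \<otimes>\<^bsub>G\<^esub> PG v)"
    using th_append[OF uS g] th_carr uS gu TT_carr pc by (simp add: A.m_assoc)
  also have "inv\<^bsub>G\<^esub> (PG v) \<otimes>\<^bsub>G\<^esub> PG ?r \<otimes>\<^bsub>G\<^esub> PG v = inv\<^bsub>G\<^esub> (PG (u @ v)) \<otimes>\<^bsub>G\<^esub> PG (u @ ?r @ v)"
  proof -
    have rv: "?r @ v \<in> lists S" using rS uS by simp
    have e1: "PG (u @ ?r @ v) = PG u \<otimes>\<^bsub>G\<^esub> PG (?r @ v)" by (rule PG_append[OF uS(1) rv])
    have e2: "PG (?r @ v) = PG ?r \<otimes>\<^bsub>G\<^esub> PG v" by (rule PG_append[OF rS uS(2)])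
    have e3: "PG (u @ v) = PG u \<otimes>\<^bsub>G\<^esub> PG v" by (rule PG_append[OF uS])
    show ?thesis unfolding e1 e2 e3 using pc by (simp add: G.inv_mult_group G.m_assoc G.cancel_helpers)
  qed
  finally show ?case unfolding r .
qed

end


context procox
begin

lemma th_wd:
  assumes rep: "rep ori Or" and go: "good_or Or"
    and ws: "ws1 \<in> lists S" "ws2 \<in> lists S" and v: "v1 \<in> carrier G" "v2 \<in> carrier G"
    "prj v1 \<in> Omega" "prj v2 \<in> Omega"
    and eq: "PG ws1 \<otimes>\<^bsub>G\<^esub> v1 = PG ws2 \<otimes>\<^bsub>G\<^esub> v2" and g: "g \<in> carrier G"
  shows "th ori g ws1 \<otimes>\<^bsub>AA\<^esub> TT v1 = th ori g ws2 \<otimes>\<^bsub>AA\<^esub> TT v2"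
proof -
  have pc: "PG ws1 \<in> carrier G" "PG ws2 \<in> carrier G" using PG_closed ws by auto
  have "prj (PG ws1 \<otimes>\<^bsub>G\<^esub> v1) = prj (PG ws2 \<otimes>\<^bsub>G\<^esub> v2)" using eq by simp
  then have "word_prod W ws1 \<otimes> prj v1 = word_prod W ws2 \<otimes> prj v2"
    using pc v prj_PG ws by simp
  then have wp: "word_prod W ws1 = word_prod W ws2"
    using decomp_unique[OF wp_Waff[OF ws(1)] wp_Waff[OF ws(2)] v(3,4)] by simp
  have ce: "cox_equiv W S ws1 ws2" by (rule pres[OF ws wp])
  let ?a = "inv\<^bsub>G\<^esub> (PG ws2) \<otimes>\<^bsub>G\<^esub> PG ws1"
  have ac: "?a \<in> carrier G" using pc by simp
  have wc: "word_prod W ws1 \<in> carrier W" "word_prod W ws2 \<in> carrier W"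
    using word_prod_closed[OF listsS] ws by auto
  have pa: "prj ?a = \<one>" using pc prj_PG ws wp wc by simp
  have la: "len ?a = 0" using len_Om[OF ac] pa one_Om by simp
  have lv: "len v1 = 0" using len_Om v by simp
  have lav: "len (?a \<otimes>\<^bsub>G\<^esub> v1) = 0" using len_Om_mult[OF v(1) ac pa] lv by simp
  have av: "?a \<otimes>\<^bsub>G\<^esub> v1 = v2" using eq pc v by (simp add: G.m_assoc G.cancel_helpers)
  have "th ori g ws1 \<otimes>\<^bsub>AA\<^esub> TT v1 = th ori g ws2 \<otimes>\<^bsub>AA\<^esub> (TT ?a \<otimes>\<^bsub>AA\<^esub> TT v1)"
    using th_cox[OF rep go ce g] th_carr ws TT_carr ac v by (simp add: A.m_assoc)
  also have "TT ?a \<otimes>\<^bsub>AA\<^esub> TT v1 = TT v2" using TT_mult[OF ac v(1)] la lv lav av by simp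
  finally show ?thesis .
qed

lemma decompW: "x \<in> carrier W \<Longrightarrow> \<exists>w\<in>Waff. \<exists>u\<in>Omega. x = w \<otimes> u"
  using Om_prod unfolding set_mult_def by blast

lemma S_Waff: "s \<in> S \<Longrightarrow> s \<in> Waff"
  using wp_Waff[of "[s]"] S_c by (simp add: word_prod_Cons)

lemma alt_Waff: "s \<in> S \<Longrightarrow> t \<in> S \<Longrightarrow> alt_prod W s t i \<in> Waff"
  using wp_Waff[OF altl_lists, of s t i] by (simp add: word_prod_altl)

lemma conj_alt:
  "u \<in> carrier W \<Longrightarrow> s \<in> carrier W \<Longrightarrow> t \<in> carrier W \<Longrightarrow>
   u \<otimes> alt_prod W s t i = alt_prod W (cj u s) (cj u t) i \<otimes> u"
proof (induct i arbitrary: s t)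
  case 0 then show ?case by simp
next
  case (Suc i)
  have "u \<otimes> alt_prod W s t (Suc i) = (u \<otimes> s \<otimes> inv u) \<otimes> (u \<otimes> alt_prod W t s i)"
    using Suc.prems by (simp add: m_assoc alt_closed cancel_helpers)
  also have "\<dots> = cj u s \<otimes> (alt_prod W (cj u t) (cj u s) i \<otimes> u)"
    using Suc.hyps[of t s] Suc.prems by (simp add: cj_def)
  finally show ?case using Suc.prems by (simp add: m_assoc cj_def alt_closed)
qed

lemma cox_m_cj: "u \<in> Omega \<Longrightarrow> s \<in> S \<Longrightarrow> t \<in> S \<Longrightarrow> cox_m W (cj u s) (cj u t) = cox_m W s t"
proof -
  assume u: "u \<in> Omega" and s: "s \<in> S" and t: "t \<in> S"
  have uc: "u \<in> carrier W" using Om_carr u by simp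
  have sc: "s \<in> carrier W" "t \<in> carrier W" using S_c s t by auto
  have "cj u s \<otimes> cj u t = u \<otimes> (s \<otimes> t) \<otimes> inv u"
    unfolding cj_def using uc sc by (simp add: m_assoc cancel_helpers)
  then show ?thesis unfolding cox_m_def using ord_conj[of "s \<otimes> t" u] uc sc by simp
qed

lemma cj_mult: "u \<in> carrier W \<Longrightarrow> u0 \<in> carrier W \<Longrightarrow> s \<in> carrier W \<Longrightarrow> cj (u \<otimes> u0) s = cj u (cj u0 s)"
  unfolding cj_def by (simp add: m_assoc inv_mult_group)

lemma ext_good:
  assumes oe: "orientation_ext W Waff S Omega Or"
  shows "good_or Or"
proof -
  obtain ori where oa: "orientation_aff W Waff S ori"
    and ext: "\<forall>w\<in>Waff. \<forall>u\<in>Omega. \<forall>s\<in>S. Or (w \<otimes> u) s = ori w (u \<otimes> s \<otimes> inv u)"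
    using oe unfolding orientation_ext_def by blast
  have O0: "\<forall>w\<in>Waff. \<forall>s\<in>S. ori w s \<in> {1, -1}"
    and O1: "\<forall>w\<in>Waff. \<forall>s\<in>S. ori (w \<otimes> s) s = - ori w s"
    and O3: "\<forall>w\<in>Waff. \<forall>s\<in>S. \<forall>t\<in>S. cox_m W s t \<noteq> 0 \<longrightarrow> or2 W ori w s t"
    using oa unfolding orientation_aff_or2 by blast+
  have key: "Or (w \<otimes> u) s = ori w (cj u s)" if "w \<in> Waff" "u \<in> Omega" "s \<in> S" for w u s
    using ext that unfolding cj_def by blast
  have P0: "\<forall>x\<in>carrier W. \<forall>s\<in>S. Or x s \<in> {1, -1}"
  proof (intro ballI)
    fix x s assume x: "x \<in> carrier W" and s: "s \<in> S"
    obtain w u where wu: "w \<in> Waff" "u \<in> Omega" "x = w \<otimes> u" using decompW[OF x] by blast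
    show "Or x s \<in> {1, -1}" using key[OF wu(1,2) s] O0 wu cj_S[OF wu(2) s] by simp
  qed
  have P1: "\<forall>x\<in>carrier W. \<forall>s\<in>S. Or (x \<otimes> s) s = - Or x s"
  proof (intro ballI)
    fix x s assume x: "x \<in> carrier W" and s: "s \<in> S"
    obtain w u where wu: "w \<in> Waff" "u \<in> Omega" "x = w \<otimes> u" using decompW[OF x] by blast
    have s': "cj u s \<in> S" using cj_S[OF wu(2) s] .
    have wc: "w \<in> carrier W" "u \<in> carrier W" using Waff_carr Om_carr wu by auto
    have e: "x \<otimes> s = (w \<otimes> cj u s) \<otimes> u"
      unfolding wu(3) cj_def using wc S_c[OF s] by (simp add: m_assoc)
    have ws: "w \<otimes> cj u s \<in> Waff" using subgroup.m_closed[OF Waff_sub wu(1) S_Waff[OF s']] .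
    have "Or (x \<otimes> s) s = ori (w \<otimes> cj u s) (cj u s)" unfolding e by (rule key[OF ws wu(2) s])
    also have "\<dots> = - ori w (cj u s)" using O1 wu(1) s' by blast
    also have "\<dots> = - Or x s" using key[OF wu(1,2) s] wu(3) by simp
    finally show "Or (x \<otimes> s) s = - Or x s" .
  qed
  have P2: "\<forall>x\<in>carrier W. \<forall>u0\<in>Omega. \<forall>s\<in>S. Or (x \<otimes> u0) s = Or x (cj u0 s)"
  proof (intro ballI)
    fix x u0 s assume x: "x \<in> carrier W" and u0: "u0 \<in> Omega" and s: "s \<in> S"
    obtain w u where wu: "w \<in> Waff" "u \<in> Omega" "x = w \<otimes> u" using decompW[OF x] by blast
    have wc: "w \<in> carrier W" "u \<in> carrier W" "u0 \<in> carrier W" using Waff_carr Om_carr wu u0 by auto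
    have uu: "u \<otimes> u0 \<in> Omega" using subgroup.m_closed[OF Om_sub wu(2) u0] .
    have "Or (x \<otimes> u0) s = Or (w \<otimes> (u \<otimes> u0)) s" using wu wc by (simp add: m_assoc)
    also have "\<dots> = ori w (cj (u \<otimes> u0) s)" by (rule key[OF wu(1) uu s])
    also have "\<dots> = ori w (cj u (cj u0 s))" using cj_mult wc S_c[OF s] by simp
    also have "\<dots> = Or x (cj u0 s)" using key[OF wu(1,2) cj_S[OF u0 s]] wu(3) by simp
    finally show "Or (x \<otimes> u0) s = Or x (cj u0 s)" .
  qed
  have P3: "\<forall>x\<in>carrier W. \<forall>s\<in>S. \<forall>t\<in>S. cox_m W s t \<noteq> 0 \<longrightarrow> or2 W Or x s t"
  proof (intro ballI impI)
    fix x s t assume x: "x \<in> carrier W" and s: "s \<in> S" and t: "t \<in> S" and m: "cox_m W s t \<noteq> 0"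
    obtain w u where wu: "w \<in> Waff" "u \<in> Omega" "x = w \<otimes> u" using decompW[OF x] by blast
    have wc: "w \<in> carrier W" "u \<in> carrier W" using Waff_carr Om_carr wu by auto
    have sc: "s \<in> carrier W" "t \<in> carrier W" using S_c s t by auto
    define s' where "s' = cj u s"
    define t' where "t' = cj u t"
    have s'S: "s' \<in> S" "t' \<in> S" unfolding s'_def t'_def using cj_S wu s t by auto
    have cm: "cox_m W s' t' = cox_m W s t" unfolding s'_def t'_def by (rule cox_m_cj[OF wu(2) s t])
    have cm2: "cox_m W t' s' = cox_m W t s" unfolding s'_def t'_def by (rule cox_m_cj[OF wu(2) t s])
    have o: "or2 W ori w s' t'" using O3 wu(1) s'S cm m by simp
    have q: "Or (x \<otimes> alt_prod W a b i) (if even i then a else b) = ori (w \<otimes> alt_prod W (cj u a) (cj u b) i) (if even i then cj u a else cj u b)"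
      if ab: "a \<in> S" "b \<in> S" for a b i
    proof -
      have abc: "a \<in> carrier W" "b \<in> carrier W" using S_c ab by auto
      have e: "x \<otimes> alt_prod W a b i = (w \<otimes> alt_prod W (cj u a) (cj u b) i) \<otimes> u"
        unfolding wu(3) using conj_alt[OF wc(2) abc, of i] wc abc alt_closed
        by (simp add: m_assoc cj_def)
      have wa: "w \<otimes> alt_prod W (cj u a) (cj u b) i \<in> Waff"
        using subgroup.m_closed[OF Waff_sub wu(1) alt_Waff[OF cj_S[OF wu(2) ab(1)] cj_S[OF wu(2) ab(2)]]] .
      have "(if even i then a else b) \<in> S" using ab by simp
      then show ?thesis unfolding e using key[OF wa wu(2)] by (simp add: if_distrib[of "cj u"])
    qed
    have q1: "\<And>i. Or (x \<otimes> alt_prod W s t i) (if even i then s else t) = ori (w \<otimes> alt_prod W s' t' i) (if even i then s' else t')"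
      unfolding s'_def t'_def using q[OF s t] by blast
    have q2: "\<And>i. Or (x \<otimes> alt_prod W t s i) (if even i then t else s) = ori (w \<otimes> alt_prod W t' s' i) (if even i then t' else s')"
      unfolding s'_def t'_def using q[OF t s] by blast
    show "or2 W Or x s t" using o unfolding or2_def Let_def q1 q2 cm .
  qed
  show ?thesis unfolding good_or_def using P0 P1 P2 P3 by blast
qed

lemma good_ext:
  assumes go: "good_or Or"
  shows "orientation_ext W Waff S Omega Or"
  unfolding orientation_ext_def
proof (intro exI conjI)
  show "orientation_aff W Waff S Or"
    unfolding orientation_aff_or2 using go Waff_carr unfolding good_or_def by blast
  show "\<forall>w\<in>Waff. \<forall>u\<in>Omega. \<forall>s\<in>S. Or (w \<otimes> u) s = Or w (u \<otimes> s \<otimes> inv u)"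
    using good_P2[OF go] Waff_carr unfolding cj_def by blast
qed

lemma good_shift:
  assumes go: "good_or Or" and x0: "x0 \<in> carrier W"
  shows "good_or (\<lambda>x s. Or (x0 \<otimes> x) s)"
proof -
  have P0: "\<forall>x\<in>carrier W. \<forall>s\<in>S. Or (x0 \<otimes> x) s \<in> {1, -1}"
    using good_P0[OF go] x0 by simp
  have P1: "\<forall>x\<in>carrier W. \<forall>s\<in>S. Or (x0 \<otimes> (x \<otimes> s)) s = - Or (x0 \<otimes> x) s"
    using good_P1[OF go] x0 S_c by (simp add: m_assoc[symmetric])
  have P2: "\<forall>x\<in>carrier W. \<forall>u\<in>Omega. \<forall>s\<in>S. Or (x0 \<otimes> (x \<otimes> u)) s = Or (x0 \<otimes> x) (cj u s)"
    using good_P2[OF go] x0 Om_carr by (simp add: m_assoc[symmetric])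
  have P3: "\<forall>x\<in>carrier W. \<forall>s\<in>S. \<forall>t\<in>S. cox_m W s t \<noteq> 0 \<longrightarrow> or2 W (\<lambda>x s. Or (x0 \<otimes> x) s) x s t"
  proof (intro ballI impI)
    fix x s t assume x: "x \<in> carrier W" and s: "s \<in> S" and t: "t \<in> S" and m: "cox_m W s t \<noteq> 0"
    have sc: "s \<in> carrier W" "t \<in> carrier W" using S_c s t by auto
    have o: "or2 W Or (x0 \<otimes> x) s t" using good_P3[OF go _ s t m] x0 x by simp
    have e1: "\<And>i. x0 \<otimes> (x \<otimes> alt_prod W s t i) = x0 \<otimes> x \<otimes> alt_prod W s t i"
      using x0 x sc by (simp add: m_assoc alt_closed)
    have e2: "\<And>i. x0 \<otimes> (x \<otimes> alt_prod W t s i) = x0 \<otimes> x \<otimes> alt_prod W t s i"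
      using x0 x sc by (simp add: m_assoc alt_closed)
    show "or2 W (\<lambda>x s. Or (x0 \<otimes> x) s) x s t" using o unfolding or2_def Let_def e1 e2 .
  qed
  show ?thesis unfolding good_or_def using P0 P1 P2 P3 by blast
qed

end


context procox
begin

abbreviation "ORS \<equiv> pro_orientations G W Waff S Omega prj"

lemma Ors_iff: "ori \<in> ORS \<longleftrightarrow> (\<exists>Or. orientation_ext W Waff S Omega Or \<and>
    ori = (\<lambda>g s. if g \<in> carrier G \<and> s \<in> S then Or (prj g) s else undefined))"
  unfolding pro_orientations_def by blast

lemma Ors_rep: "ori \<in> ORS \<Longrightarrow> \<exists>Or. good_or Or \<and> rep ori Or"
proof -
  assume "ori \<in> ORS"
  then obtain Or where oe: "orientation_ext W Waff S Omega Or"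
    and o: "ori = (\<lambda>g s. if g \<in> carrier G \<and> s \<in> S then Or (prj g) s else undefined)"
    unfolding Ors_iff by blast
  have "good_or Or" by (rule ext_good[OF oe])
  moreover have "rep ori Or" unfolding o by simp
  ultimately show ?thesis by blast
qed

lemma Ors_act: "ori \<in> ORS \<Longrightarrow> w \<in> carrier G \<Longrightarrow> orient_act G S ori w \<in> ORS"
proof -
  assume ori: "ori \<in> ORS" and w: "w \<in> carrier G"
  then obtain Or where oe: "orientation_ext W Waff S Omega Or"
    and o: "ori = (\<lambda>g s. if g \<in> carrier G \<and> s \<in> S then Or (prj g) s else undefined)"
    unfolding Ors_iff by blast
  let ?Or' = "\<lambda>x s. Or (prj w \<otimes> x) s"
  have "good_or ?Or'" by (rule good_shift[OF ext_good[OF oe]]) (use w in simp)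
  then have oe': "orientation_ext W Waff S Omega ?Or'" by (rule good_ext)
  have "orient_act G S ori w = (\<lambda>g s. if g \<in> carrier G \<and> s \<in> S then ?Or' (prj g) s else undefined)"
    unfolding orient_act_def o using w by (intro ext) auto
  then show ?thesis unfolding Ors_iff using oe' by blast
qed

lemma th_act:
  assumes w: "w \<in> carrier G"
  shows "ws \<in> lists S \<Longrightarrow> g \<in> carrier G \<Longrightarrow> th (orient_act G S ori w) g ws = th ori (w \<otimes>\<^bsub>G\<^esub> g) ws"
proof (induct ws arbitrary: g)
  case Nil then show ?case by simp
next
  case (Cons s ws)
  have s: "s \<in> S" and ws: "ws \<in> lists S" using Cons.prems by auto
  have gs: "g \<otimes>\<^bsub>G\<^esub> n s \<in> carrier G" using Cons.prems n_carr[OF s] by simp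
  have "orient_act G S ori w g s = ori (w \<otimes>\<^bsub>G\<^esub> g) s" unfolding orient_act_def using Cons.prems s by simp
  moreover have "w \<otimes>\<^bsub>G\<^esub> (g \<otimes>\<^bsub>G\<^esub> n s) = w \<otimes>\<^bsub>G\<^esub> g \<otimes>\<^bsub>G\<^esub> n s" using w Cons.prems n_carr[OF s] by (simp add: G.m_assoc)
  ultimately show ?case using Cons.hyps[OF ws gs] by simp
qed

definition isdec :: "'g \<Rightarrow> 'a list \<times> 'g \<Rightarrow> bool" where
  "isdec g p \<longleftrightarrow> fst p \<in> lists S \<and> snd p \<in> carrier G \<and> prj (snd p) \<in> Omega \<and> g = PG (fst p) \<otimes>\<^bsub>G\<^esub> snd p"

lemma dec_ex: "g \<in> carrier G \<Longrightarrow> \<exists>p. isdec g p"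
proof -
  assume g: "g \<in> carrier G"
  obtain w u where wu: "w \<in> Waff" "u \<in> Omega" "prj g = w \<otimes> u" using decompW[of "prj g"] g by auto
  obtain ws where ws: "ws \<in> lists S" "w = word_prod W ws" using wu(1) Waff_eq by blast
  let ?v = "inv\<^bsub>G\<^esub> (PG ws) \<otimes>\<^bsub>G\<^esub> g"
  have pc: "PG ws \<in> carrier G" using PG_closed[OF ws(1)] .
  have vc: "?v \<in> carrier G" using pc g by simp
  have wc: "w \<in> carrier W" "u \<in> carrier W" using Waff_carr Om_carr wu by auto
  have "prj ?v = inv w \<otimes> (w \<otimes> u)" using pc g wu(3) prj_PG[OF ws(1)] ws(2) by simp
  then have pv: "prj ?v = u" using wc by (simp add: cancel_helpers)
  have "g = PG ws \<otimes>\<^bsub>G\<^esub> ?v" using pc g by (simp add: G.cancel_helpers)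
  then show ?thesis unfolding isdec_def using ws vc pv wu by (intro exI[of _ "(ws, ?v)"]) simp
qed

definition theta :: "'g \<Rightarrow> ('g \<Rightarrow> 'a \<Rightarrow> int) \<Rightarrow> ('g \<times> bool) list set" where
  "theta g ori = th ori \<one>\<^bsub>G\<^esub> (fst (SOME p. isdec g p)) \<otimes>\<^bsub>AA\<^esub> TT (snd (SOME p. isdec g p))"

lemma theta_carr: "g \<in> carrier G \<Longrightarrow> theta g ori \<in> carrier AA"
proof -
  assume g: "g \<in> carrier G"
  have "isdec g (SOME p. isdec g p)" using dec_ex[OF g] by (rule someI_ex)
  then show ?thesis unfolding theta_def isdec_def using th_carr TT_carr by auto
qed

lemma theta_eq:
  assumes ori: "ori \<in> ORS" and d: "isdec g (ws, v)"
  shows "theta g ori = th ori \<one>\<^bsub>G\<^esub> ws \<otimes>\<^bsub>AA\<^esub> TT v"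
proof -
  obtain Or where go: "good_or Or" and rep: "rep ori Or" using Ors_rep[OF ori] by blast
  have "isdec g (SOME p. isdec g p)" using d by (rule someI)
  then show ?thesis unfolding theta_def using d unfolding isdec_def
    by (intro th_wd[OF rep go]) auto
qed

end


context procox
begin

lemma theta_mult:
  assumes ori: "ori \<in> ORS" and w: "w \<in> carrier G" and w': "w' \<in> carrier G"
  shows "theta (w \<otimes>\<^bsub>G\<^esub> w') ori = theta w ori \<otimes>\<^bsub>AA\<^esub> theta w' (orient_act G S ori w)"
proof -
  obtain Or where go: "good_or Or" and rep: "rep ori Or" using Ors_rep[OF ori] by blast
  obtain p where p: "isdec w p" using dec_ex[OF w] by blast
  obtain ws v where wv: "p = (ws, v)" by force
  obtain p' where p': "isdec w' p'" using dec_ex[OF w'] by blast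
  obtain ws' v' where wv': "p' = (ws', v')" by force
  have d: "ws \<in> lists S" "v \<in> carrier G" "prj v \<in> Omega" "w = PG ws \<otimes>\<^bsub>G\<^esub> v"
    using p wv unfolding isdec_def by auto
  have d': "ws' \<in> lists S" "v' \<in> carrier G" "prj v' \<in> Omega" "w' = PG ws' \<otimes>\<^bsub>G\<^esub> v'"
    using p' wv' unfolding isdec_def by auto
  let ?u = "prj v"
  have pc: "PG ws \<in> carrier G" "PG ws' \<in> carrier G" using PG_closed d d' by auto
  obtain v'' where v'': "v'' \<in> carrier G" "prj v'' = ?u"
    "v \<otimes>\<^bsub>G\<^esub> PG ws' = PG (map (cj ?u) ws') \<otimes>\<^bsub>G\<^esub> v''"
    "TT v \<otimes>\<^bsub>AA\<^esub> th ori (PG ws \<otimes>\<^bsub>G\<^esub> v) ws' = th ori (PG ws) (map (cj ?u) ws') \<otimes>\<^bsub>AA\<^esub> TT v''"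
    using th_Om[OF rep go d(3) d'(1) pc(1) d(2) refl] by blast
  let ?cws = "map (cj ?u) ws'"
  have cws: "?cws \<in> lists S" using d'(1) cj_S[OF d(3)] by auto
  have pcc: "PG ?cws \<in> carrier G" using PG_closed[OF cws] .
  have ori': "orient_act G S ori w \<in> ORS" by (rule Ors_act[OF ori w])
  have t1: "theta w ori = th ori \<one>\<^bsub>G\<^esub> ws \<otimes>\<^bsub>AA\<^esub> TT v" using theta_eq[OF ori] p wv by simp
  have "theta w' (orient_act G S ori w) = th (orient_act G S ori w) \<one>\<^bsub>G\<^esub> ws' \<otimes>\<^bsub>AA\<^esub> TT v'"
    using theta_eq[OF ori'] p' wv' by simp
  also have "th (orient_act G S ori w) \<one>\<^bsub>G\<^esub> ws' = th ori w ws'"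
    using th_act[OF w d'(1)] w by simp
  finally have t2: "theta w' (orient_act G S ori w) = th ori (PG ws \<otimes>\<^bsub>G\<^esub> v) ws' \<otimes>\<^bsub>AA\<^esub> TT v'"
    using d(4) by simp
  have Om: "prj (v'' \<otimes>\<^bsub>G\<^esub> v') \<in> Omega" using v'' d d' subgroup.m_closed[OF Om_sub] by simp
  have vv: "v'' \<otimes>\<^bsub>G\<^esub> v' \<in> carrier G" using v'' d' by simp
  have dec: "isdec (w \<otimes>\<^bsub>G\<^esub> w') (ws @ ?cws, v'' \<otimes>\<^bsub>G\<^esub> v')"
  proof -
    have "w \<otimes>\<^bsub>G\<^esub> w' = PG ws \<otimes>\<^bsub>G\<^esub> (v \<otimes>\<^bsub>G\<^esub> PG ws') \<otimes>\<^bsub>G\<^esub> v'"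
      using d d' pc by (simp add: G.m_assoc)
    also have "\<dots> = PG (ws @ ?cws) \<otimes>\<^bsub>G\<^esub> (v'' \<otimes>\<^bsub>G\<^esub> v')"
      unfolding v''(3) PG_append[OF d(1) cws] using pc pcc v'' d' by (simp add: G.m_assoc)
    finally show ?thesis unfolding isdec_def using d(1) cws Om vv by simp
  qed
  have l: "len v'' = 0" "len v' = 0" "len (v'' \<otimes>\<^bsub>G\<^esub> v') = 0"
    using len_Om v'' d d' Om vv by auto
  have c: "th ori \<one>\<^bsub>G\<^esub> ws \<in> carrier AA" "TT v \<in> carrier AA" "TT v' \<in> carrier AA" "TT v'' \<in> carrier AA"
    "th ori (PG ws \<otimes>\<^bsub>G\<^esub> v) ws' \<in> carrier AA" "th ori (PG ws) ?cws \<in> carrier AA"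
    using th_carr d d' TT_carr v'' cws by auto
  have "theta w ori \<otimes>\<^bsub>AA\<^esub> theta w' (orient_act G S ori w)
      = th ori \<one>\<^bsub>G\<^esub> ws \<otimes>\<^bsub>AA\<^esub> (TT v \<otimes>\<^bsub>AA\<^esub> th ori (PG ws \<otimes>\<^bsub>G\<^esub> v) ws') \<otimes>\<^bsub>AA\<^esub> TT v'"
    unfolding t1 t2 using c by (simp add: A.m_assoc)
  also have "\<dots> = (th ori \<one>\<^bsub>G\<^esub> ws \<otimes>\<^bsub>AA\<^esub> th ori (PG ws) ?cws) \<otimes>\<^bsub>AA\<^esub> (TT v'' \<otimes>\<^bsub>AA\<^esub> TT v')"
    unfolding v''(4) using c by (simp add: A.m_assoc)
  also have "th ori \<one>\<^bsub>G\<^esub> ws \<otimes>\<^bsub>AA\<^esub> th ori (PG ws) ?cws = th ori \<one>\<^bsub>G\<^esub> (ws @ ?cws)"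
    using th_append[OF d(1) cws, of "\<one>\<^bsub>G\<^esub>" ori] pc by simp
  also have "TT v'' \<otimes>\<^bsub>AA\<^esub> TT v' = TT (v'' \<otimes>\<^bsub>G\<^esub> v')" using TT_mult[OF v''(1) d'(2)] l by simp
  also have "th ori \<one>\<^bsub>G\<^esub> (ws @ ?cws) \<otimes>\<^bsub>AA\<^esub> TT (v'' \<otimes>\<^bsub>G\<^esub> v') = theta (w \<otimes>\<^bsub>G\<^esub> w') ori"
    using theta_eq[OF ori dec] by simp
  finally show ?thesis by simp
qed

lemma theta_n:
  assumes ori: "ori \<in> ORS" and s: "s \<in> S"
  shows "theta (n s) ori = (if ori \<one>\<^bsub>G\<^esub> s = 1 then TT (n s) else inv\<^bsub>AA\<^esub> (TT (inv\<^bsub>G\<^esub> (n s))))"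
proof -
  have ns: "n s \<in> carrier G" using n_carr[OF s] .
  have "isdec (n s) ([s], \<one>\<^bsub>G\<^esub>)" unfolding isdec_def using s ns one_Om by (simp add: G.word_prod_Cons)
  then have "theta (n s) ori = th ori \<one>\<^bsub>G\<^esub> [s] \<otimes>\<^bsub>AA\<^esub> TT \<one>\<^bsub>G\<^esub>" by (rule theta_eq[OF ori])
  also have "\<dots> = Ls (ori \<one>\<^bsub>G\<^esub> s) s" using Ls_carr[OF s] by (simp add: TT_one)
  finally show ?thesis by (simp add: Lsign_def)
qed

lemma theta_Om:
  assumes ori: "ori \<in> ORS" and u: "u \<in> carrier G" "prj u \<in> Omega"
  shows "theta u ori = TT u"
proof -
  have "isdec u ([], u)" unfolding isdec_def using u by simp
  then have "theta u ori = th ori \<one>\<^bsub>G\<^esub> [] \<otimes>\<^bsub>AA\<^esub> TT u" by (rule theta_eq[OF ori])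
  then show ?thesis using TT_carr[OF u(1)] by simp
qed

lemma theta_unique:
  assumes c: "\<forall>w\<in>carrier G. \<forall>ori\<in>ORS. th' w ori \<in> carrier AA"
    and m: "\<forall>w\<in>carrier G. \<forall>w'\<in>carrier G. \<forall>ori\<in>ORS.
              th' (w \<otimes>\<^bsub>G\<^esub> w') ori = th' w ori \<otimes>\<^bsub>AA\<^esub> th' w' (orient_act G S ori w)"
    and ns: "\<forall>s\<in>S. \<forall>ori\<in>ORS.
              th' (n s) ori = (if ori \<one>\<^bsub>G\<^esub> s = 1 then TT (n s) else inv\<^bsub>AA\<^esub> (TT (inv\<^bsub>G\<^esub> (n s))))"
    and om: "\<forall>u\<in>carrier G. prj u \<in> Omega \<longrightarrow> (\<forall>ori\<in>ORS. th' u ori = TT u)"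
  shows "\<forall>w\<in>carrier G. \<forall>ori\<in>ORS. th' w ori = theta w ori"
proof -
  have key: "ws \<in> lists S \<Longrightarrow> v \<in> carrier G \<Longrightarrow> prj v \<in> Omega \<Longrightarrow> ori \<in> ORS \<Longrightarrow>
      th' (PG ws \<otimes>\<^bsub>G\<^esub> v) ori = theta (PG ws \<otimes>\<^bsub>G\<^esub> v) ori" for ws v ori
  proof (induct ws arbitrary: ori)
    case Nil
    then show ?case using om theta_Om by simp
  next
    case (Cons s ws)
    have s: "s \<in> S" and ws: "ws \<in> lists S" using Cons.prems by auto
    let ?h = "PG ws \<otimes>\<^bsub>G\<^esub> v"
    have hc: "?h \<in> carrier G" using PG_closed[OF ws] Cons.prems by simp
    have nc: "n s \<in> carrier G" using n_carr[OF s] .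
    have e: "PG (s # ws) \<otimes>\<^bsub>G\<^esub> v = n s \<otimes>\<^bsub>G\<^esub> ?h"
      using nc PG_closed[OF ws] Cons.prems by (simp add: G.word_prod_Cons G.m_assoc)
    have oa: "orient_act G S ori (n s) \<in> ORS" by (rule Ors_act[OF Cons.prems(4) nc])
    have "th' (n s \<otimes>\<^bsub>G\<^esub> ?h) ori = th' (n s) ori \<otimes>\<^bsub>AA\<^esub> th' ?h (orient_act G S ori (n s))"
      using m nc hc Cons.prems(4) by blast
    also have "\<dots> = theta (n s) ori \<otimes>\<^bsub>AA\<^esub> theta ?h (orient_act G S ori (n s))"
      using ns s Cons.prems(4) theta_n Cons.hyps[OF ws Cons.prems(2,3) oa] by simp
    also have "\<dots> = theta (n s \<otimes>\<^bsub>G\<^esub> ?h) ori" using theta_mult[OF Cons.prems(4) nc hc] by simp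
    finally show ?case unfolding e .
  qed
  show ?thesis
  proof (intro ballI)
    fix w ori assume w: "w \<in> carrier G" and ori: "ori \<in> ORS"
    obtain p where p: "isdec w p" using dec_ex[OF w] by blast
    then show "th' w ori = theta w ori" using key[of "fst p" "snd p" ori] ori unfolding isdec_def by auto
  qed
qed

end

theorem theorem2p6p1:
  fixes G :: "('g, 'c) monoid_scheme" and W :: "('w, 'd) monoid_scheme"
    and Waff S Omega :: "'w set" and prj :: "'g \<Rightarrow> 'w" and n :: "'w \<Rightarrow> 'g"
  assumes "pro_p_coxeter G W Waff S Omega prj n"
  defines "Ors \<equiv> pro_orientations G W Waff S Omega prj"
    and "A \<equiv> A_group G (pro_length W S Omega prj)"
    and "T \<equiv> A_gen G (pro_length W S Omega prj)"
  shows "\<exists>\<theta> :: 'g \<Rightarrow> ('g \<Rightarrow> 'w \<Rightarrow> int) \<Rightarrow> ('g \<times> bool) list set.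
           (\<forall>w\<in>carrier G. \<forall>ori\<in>Ors. \<theta> w ori \<in> carrier A) \<and>
           (\<forall>w\<in>carrier G. \<forall>w'\<in>carrier G. \<forall>ori\<in>Ors.
              \<theta> (w \<otimes>\<^bsub>G\<^esub> w') ori = \<theta> w ori \<otimes>\<^bsub>A\<^esub> \<theta> w' (orient_act G S ori w)) \<and>
           (\<forall>s\<in>S. \<forall>ori\<in>Ors.
              \<theta> (n s) ori = (if ori \<one>\<^bsub>G\<^esub> s = 1 then T (n s) else inv\<^bsub>A\<^esub> (T (inv\<^bsub>G\<^esub> (n s))))) \<and>
           (\<forall>u\<in>carrier G. prj u \<in> Omega \<longrightarrow> (\<forall>ori\<in>Ors. \<theta> u ori = T u)) \<and>
           (\<forall>\<theta>' :: 'g \<Rightarrow> ('g \<Rightarrow> 'w \<Rightarrow> int) \<Rightarrow> ('g \<times> bool) list set.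
              ((\<forall>w\<in>carrier G. \<forall>ori\<in>Ors. \<theta>' w ori \<in> carrier A) \<and>
               (\<forall>w\<in>carrier G. \<forall>w'\<in>carrier G. \<forall>ori\<in>Ors.
                  \<theta>' (w \<otimes>\<^bsub>G\<^esub> w') ori = \<theta>' w ori \<otimes>\<^bsub>A\<^esub> \<theta>' w' (orient_act G S ori w)) \<and>
               (\<forall>s\<in>S. \<forall>ori\<in>Ors.
                  \<theta>' (n s) ori = (if ori \<one>\<^bsub>G\<^esub> s = 1 then T (n s) else inv\<^bsub>A\<^esub> (T (inv\<^bsub>G\<^esub> (n s))))) \<and>
               (\<forall>u\<in>carrier G. prj u \<in> Omega \<longrightarrow> (\<forall>ori\<in>Ors. \<theta>' u ori = T u)))
              \<longrightarrow> (\<forall>w\<in>carrier G. \<forall>ori\<in>Ors. \<theta>' w ori = \<theta> w ori))"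
proof -
  have ppc: "pro_p_coxeter G W Waff S Omega prj n" by fact
  have ec: "ext_coxeter W Waff S Omega" using ppc unfolding pro_p_coxeter_def by (elim conjE)
  have cs: "coxeter_system W Waff S" using ec unfolding ext_coxeter_def by (elim conjE)
  have gW: "group W" using cs unfolding coxeter_system_def by (elim conjE)
  interpret P: procox W Waff S Omega G prj n
    by (intro procox.intro extcox.intro coxsys.intro extcox_axioms.intro coxsys_axioms.intro procox_axioms.intro gW cs ec ppc)
  show ?thesis unfolding Ors_def A_def T_def
  proof (intro exI[of _ P.theta] conjI allI impI)
    show "\<forall>w\<in>carrier G. \<forall>ori\<in>pro_orientations G W Waff S Omega prj. P.theta w ori \<in> carrier (A_group G (pro_length W S Omega prj))"
      using P.theta_carr by blast
    show "\<forall>w\<in>carrier G. \<forall>w'\<in>carrier G. \<forall>ori\<in>pro_orientations G W Waff S Omega prj.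
        P.theta (w \<otimes>\<^bsub>G\<^esub> w') ori = P.theta w ori \<otimes>\<^bsub>A_group G (pro_length W S Omega prj)\<^esub> P.theta w' (orient_act G S ori w)"
      using P.theta_mult by blast
    show "\<forall>s\<in>S. \<forall>ori\<in>pro_orientations G W Waff S Omega prj.
        P.theta (n s) ori = (if ori \<one>\<^bsub>G\<^esub> s = 1 then A_gen G (pro_length W S Omega prj) (n s)
          else inv\<^bsub>A_group G (pro_length W S Omega prj)\<^esub> (A_gen G (pro_length W S Omega prj) (inv\<^bsub>G\<^esub> (n s))))"
      using P.theta_n by blast
    show "\<forall>u\<in>carrier G. prj u \<in> Omega \<longrightarrow> (\<forall>ori\<in>pro_orientations G W Waff S Omega prj. P.theta u ori = A_gen G (pro_length W S Omega prj) u)"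
      using P.theta_Om by blast
  next
    fix th'
    assume "(\<forall>w\<in>carrier G. \<forall>ori\<in>pro_orientations G W Waff S Omega prj. th' w ori \<in> carrier (A_group G (pro_length W S Omega prj))) \<and>
       (\<forall>w\<in>carrier G. \<forall>w'\<in>carrier G. \<forall>ori\<in>pro_orientations G W Waff S Omega prj.
         th' (w \<otimes>\<^bsub>G\<^esub> w') ori = th' w ori \<otimes>\<^bsub>A_group G (pro_length W S Omega prj)\<^esub> th' w' (orient_act G S ori w)) \<and>
       (\<forall>s\<in>S. \<forall>ori\<in>pro_orientations G W Waff S Omega prj.
         th' (n s) ori = (if ori \<one>\<^bsub>G\<^esub> s = 1 then A_gen G (pro_length W S Omega prj) (n s)
           else inv\<^bsub>A_group G (pro_length W S Omega prj)\<^esub> (A_gen G (pro_length W S Omega prj) (inv\<^bsub>G\<^esub> (n s))))) \<and>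
       (\<forall>u\<in>carrier G. prj u \<in> Omega \<longrightarrow> (\<forall>ori\<in>pro_orientations G W Waff S Omega prj. th' u ori = A_gen G (pro_length W S Omega prj) u))"
    then show "\<forall>w\<in>carrier G. \<forall>ori\<in>pro_orientations G W Waff S Omega prj. th' w ori = P.theta w ori"
      using P.theta_unique by blast
  qed
qed


end
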